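(* Consider the repeated newsvendor with horizon $T$, action space $\mathcal{X}=[0,B]$ and demand space $[0,B]$. At each round $t$ the learner chooses $X_t\in[0,B]$, a latent demand $D_t\in[0,B]$ is realized, and the learner observes only $O_t=\psi(X_t,D_t):=(\min\{D_t,X_t\},\mathbf{1}\{D_t\le X_t\})$. The history is $H_t=((X_s,O_s))_{s=1}^t$, $H_0=\emptyset$. The loss is $\ell(x,d)=h(x-d)_++b(d-x)_+$ with $h,b>0$, and $\gamma=b/(b+h)$. The environment $\mathbb{P}^\star$ is a distribution over complete demand trajectories $D_{1:T}$; let $f^\star(x):=\mathbb{E}_{\mathbb{P}^\star}[\ell(x,D_t)]$ (assumed not to depend on $t$), $x^\star\in\arg\min_{x\in[0,B]}f^\star(x)$, $r_t:=f^\star(X_t)-f^\star(x^\star)$, and for a policy $\pi$ let $\mathrm{BReg}_T(\pi;\mathbb{P}^\star):=\mathbb{E}_{\mathbb{P}^\star_\pi}[\sum_{t=1}^T r_t]$, where $\mathbb{P}^\star_\pi$ is the law of the interaction generated by $\pi$ in $\mathbb{P}^\star$. For $t\in[T]$ and a history value $h$, let $Q_t^\star(\cdot\mid h)$ be the conditional law under $\mathbb{P}^\star$ of $D_{1:T}$ given $H_{t-1}=h$, and let $Q_{t,\theta}(\cdot\mid h)$ be a learned probability kernel on $[0,B]^T$. For a completed trajectory $d_{1:T}$ let $\hat x(d_{1:T})=\inf\{x:\frac1T\sum_{s=1}^T\mathbf{1}\{d_s\le x\}\ge\gamma\}$ (the left empirical $\gamma$-quantile, an empirical risk minimizer of $x\mapsto\frac1T\sum_s\ell(x,d_s)$).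 The ideal policy $\pi_\star$ at each round $t$ samples $\widetilde D^{(t)}_{1:T}\sim Q_t^\star(\cdot\mid H_{t-1})$ and plays $X_t=\hat x(\widetilde D^{(t)}_{1:T})$; the deployed policy $\pi_\theta$ does the same with $Q_{t,\theta}(\cdot\mid H_{t-1})$ in place of $Q_t^\star$. Define the on-policy completion mismatch $$\Delta_T^{\mathrm{comp}}(\theta;\pi_\theta):=\sum_{t=1}^T\mathbb{E}_{H_{t-1}\sim\mathbb{P}^\star_{\pi_\theta}}\Big[\mathrm{KL}\big(Q_t^\star(\cdot\mid H_{t-1})\,\|\,Q_{t,\theta}(\cdot\mid H_{t-1})\big)\Big].$$ Assume: (i) there is $V_{\mathrm{comp}}\in[1,\infty)$ such that for all $t\in[T]$ and all histories $h$, $Q_{t,\theta}(\cdot\mid h)\ll Q_t^\star(\cdot\mid h)$ and $\sup_F Q_{t,\theta}(F\mid h)/Q_t^\star(F\mid h)\le V_{\mathrm{comp}}$, the supremum over measurable sets $F\subseteq[0,B]^T$; (ii) under the interaction law of $\pi_\star$ in $\mathbb{P}^\star$, $\mathbb{E}[r_t\mid H_{t-1}]=\mathbb{E}[r_t]$ almost surely for every $t$; (iii) $B'>0$ is such that $\sup r_t-\inf r_t\le B'$ almost surely. Then $$\mathrm{BReg}_T(\pi_\theta;\mathbb{P}^\star)\le\mathrm{BReg}_T(\pi_\star;\mathbb{P}^\star)+B'\sqrt{\frac{T(2+\log V_{\mathrm{comp}})}{2}\,\Delta_T^{\mathrm{comp}}(\theta;\pi_\theta)}.$$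
   Context: $(a)_+=\max\{a,0\}$. KL denotes Kullback–Leibler divergence. The conditional-mean assumption (ii) is stated in the paper as $\mathbb{E}_{\mathbb{P}^\star}[r_t\mid H_{t-1}]=\mathbb{E}_{\mathbb{P}^\star}[r_t]$ a.s.; its proof uses it under the interaction law of the ideal policy. *)

theory Defs
  imports "HOL-Probability.Probability"
begin

text \<open>Repeated newsvendor with censored demand. Rounds are indexed 1..T.
  Demand trajectories and action sequences are extensional functions on {1..T}.\<close>

definition loss :: "real \<Rightarrow> real \<Rightarrow> real \<Rightarrow> real \<Rightarrow> real" where
  "loss hc bc x d = hc * max (x - d) 0 + bc * max (d - x) 0"

definition psi :: "real \<Rightarrow> real \<Rightarrow> real \<times> bool" where
  "psi x d = (min d x, d \<le> x)"

definition Dsp :: "nat \<Rightarrow> real \<Rightarrow> (nat \<Rightarrow> real) measure" where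
  "Dsp T B = (\<Pi>\<^sub>M s\<in>{1..T}. restrict_space borel {0..B})"

definition Xsp :: "nat \<Rightarrow> (nat \<Rightarrow> real) measure" where
  "Xsp T = (\<Pi>\<^sub>M s\<in>{1..T}. (borel :: real measure))"

text \<open>Space of history values H_{t-1} = ((X_s,O_s))_{s=1}^{t-1}.\<close>
definition Hsp :: "nat \<Rightarrow> (nat \<Rightarrow> real \<times> real \<times> bool) measure" where
  "Hsp t = (\<Pi>\<^sub>M s\<in>{1..<t}. (borel :: real measure) \<Otimes>\<^sub>M ((borel :: real measure) \<Otimes>\<^sub>M count_space UNIV))"

definition hist :: "nat \<Rightarrow> (nat \<Rightarrow> real) \<Rightarrow> (nat \<Rightarrow> real) \<Rightarrow> (nat \<Rightarrow> real \<times> real \<times> bool)" where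
  "hist t d xs = (\<lambda>s\<in>{1..<t}. (xs s, psi (xs s) (d s)))"

definition Hmap :: "nat \<Rightarrow> (nat \<Rightarrow> real) \<times> (nat \<Rightarrow> real) \<Rightarrow> (nat \<Rightarrow> real \<times> real \<times> bool)" where
  "Hmap t \<omega> = hist t (fst \<omega>) (snd \<omega>)"

definition xhat :: "nat \<Rightarrow> real \<Rightarrow> (nat \<Rightarrow> real) \<Rightarrow> real" where
  "xhat T gam d = Inf {x. gam \<le> real (card {s\<in>{1..T}. d s \<le> x}) / real T}"

definition act :: "nat \<Rightarrow> real \<Rightarrow> (nat \<Rightarrow> (nat \<Rightarrow> real \<times> real \<times> bool) \<Rightarrow> (nat \<Rightarrow> real) measure)
    \<Rightarrow> nat \<Rightarrow> (nat \<Rightarrow> real \<times> real \<times> bool) \<Rightarrow> real measure" where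
  "act T gam Q t h = distr (Q t h) borel (xhat T gam)"

text \<open>Joint law of (D_{1:T}, X_{1:T}) after k rounds of interaction, D ~ P.
  Not yet played actions are set to 0.\<close>
primrec ilaw :: "nat \<Rightarrow> real \<Rightarrow> real \<Rightarrow> (nat \<Rightarrow> real) measure
    \<Rightarrow> (nat \<Rightarrow> (nat \<Rightarrow> real \<times> real \<times> bool) \<Rightarrow> (nat \<Rightarrow> real) measure)
    \<Rightarrow> nat \<Rightarrow> ((nat \<Rightarrow> real) \<times> (nat \<Rightarrow> real)) measure" where
  "ilaw T B gam P Q 0 = distr P (Dsp T B \<Otimes>\<^sub>M Xsp T) (\<lambda>d. (d, \<lambda>s\<in>{1..T}. 0))"
| "ilaw T B gam P Q (Suc k) = ilaw T B gam P Q k \<bind>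
     (\<lambda>\<omega>. distr (act T gam Q (Suc k) (Hmap (Suc k) \<omega>)) (Dsp T B \<Otimes>\<^sub>M Xsp T)
              (\<lambda>x. (fst \<omega>, (snd \<omega>)(Suc k := x))))"

definition interaction :: "nat \<Rightarrow> real \<Rightarrow> real \<Rightarrow> (nat \<Rightarrow> real) measure
    \<Rightarrow> (nat \<Rightarrow> (nat \<Rightarrow> real \<times> real \<times> bool) \<Rightarrow> (nat \<Rightarrow> real) measure)
    \<Rightarrow> ((nat \<Rightarrow> real) \<times> (nat \<Rightarrow> real)) measure" where
  "interaction T B gam P Q = ilaw T B gam P Q T"

definition breg :: "nat \<Rightarrow> (real \<Rightarrow> real) \<Rightarrow> real \<Rightarrow> ((nat \<Rightarrow> real) \<times> (nat \<Rightarrow> real)) measure \<Rightarrow> real" where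
  "breg T f xstar L = (\<integral>\<omega>. (\<Sum>t=1..T. f (snd \<omega> t) - f xstar) \<partial>L)"

text \<open>KL(P || Q) (natural log), extended by +infinity when P is not absolutely
  continuous w.r.t. Q or the log-density is not P-integrable.\<close>
definition KL :: "'a measure \<Rightarrow> 'a measure \<Rightarrow> ennreal" where
  "KL P Q = (if absolutely_continuous Q P \<and> integrable P (entropy_density (exp 1) Q P)
             then ennreal (KL_divergence (exp 1) Q P) else \<infinity>)"

definition Delta_comp :: "nat \<Rightarrow> (nat \<Rightarrow> (nat \<Rightarrow> real \<times> real \<times> bool) \<Rightarrow> (nat \<Rightarrow> real) measure)
    \<Rightarrow> (nat \<Rightarrow> (nat \<Rightarrow> real \<times> real \<times> bool) \<Rightarrow> (nat \<Rightarrow> real) measure)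
    \<Rightarrow> ((nat \<Rightarrow> real) \<times> (nat \<Rightarrow> real)) measure \<Rightarrow> ennreal" where
  "Delta_comp T Qstar Qth L =
     (\<Sum>t=1..T. \<integral>\<^sup>+ h. KL (Qstar t h) (Qth t h) \<partial>(distr L (Hsp t) (Hmap t)))"

end

theory Submission
  imports Defs
begin


lemma DV:
  fixes g :: "'a \<Rightarrow> real"
  assumes P: "prob_space P" and Q: "prob_space Q" and sPQ: "sets P = sets Q"
    and ac: "absolutely_continuous Q P"
    and int: "integrable P (entropy_density (exp 1) Q P)"
    and g[measurable]: "g \<in> borel_measurable Q" and gb: "\<And>x. x \<in> space Q \<Longrightarrow> \<bar>g x\<bar> \<le> C"
  shows "(\<integral>x. g x \<partial>P) \<le> KL_divergence (exp 1) Q P + ln (\<integral>x. exp (g x) \<partial>Q)"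
proof -
  interpret Q: prob_space Q by fact
  interpret P: prob_space P by fact
  define p where "p = RN_deriv Q P"
  have [measurable]: "p \<in> borel_measurable Q" unfolding p_def by simp
  have dens: "density Q p = P" unfolding p_def using ac sPQ by (rule Q.density_RN_deriv)
  have fin: "AE x in Q. p x \<noteq> \<infinity>" unfolding p_def
    using Q.RN_deriv_finite[OF _ ac sPQ] P.sigma_finite_measure by blast
  have gP[measurable]: "g \<in> borel_measurable P" using g sPQ by (simp cong: measurable_cong_sets)
  have spP: "space P = space Q" using sPQ by (rule sets_eq_imp_space_eq)
  have intgQ: "integrable Q (\<lambda>x. exp (g x))"
    by (rule Q.integrable_const_bound[where B="exp C"]) (auto intro!: AE_I2 dest!: gb simp: abs_le_iff)
  have intgP: "integrable P g"
    by (rule P.integrable_const_bound[where B="C"]) (auto intro!: AE_I2 simp: gb spP)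
  define Z where "Z = (\<integral>x. exp (g x) \<partial>Q)"
  have "(\<integral>x. exp (-C) \<partial>Q) \<le> Z" unfolding Z_def
    by (rule integral_mono[OF _ intgQ]) (auto dest!: gb simp: abs_le_iff)
  then have "exp (-C) \<le> Z" by (simp add: Q.prob_space)
  then have Zpos: "0 < Z" by (meson exp_gt_zero less_le_trans)
  define c where "c = ln Z"
  define h where "h x = exp (g x - c) / enn2real (p x)" for x
  have [measurable]: "h \<in> borel_measurable Q" unfolding h_def by measurable
  have hP[measurable]: "h \<in> borel_measurable P" using sPQ by (simp cong: measurable_cong_sets)
  have AEpos: "AE x in P. 0 < enn2real (p x)"
  proof -
    have "AE x in density Q p. 0 < enn2real (p x)"
      by (subst AE_density) (auto intro: AE_mp[OF fin] simp: enn2real_positive_iff less_top)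
    then show ?thesis unfolding dens .
  qed
  have nnh: "(\<integral>\<^sup>+x. ennreal (h x) \<partial>P) \<le> 1"
  proof -
    have "(\<integral>\<^sup>+x. ennreal (h x) \<partial>P) = (\<integral>\<^sup>+x. p x * ennreal (h x) \<partial>Q)"
      by (subst dens[symmetric], subst nn_integral_density) auto
    also have "\<dots> \<le> (\<integral>\<^sup>+x. ennreal (exp (g x - c)) \<partial>Q)"
    proof (intro nn_integral_mono_AE, rule AE_mp[OF fin], intro AE_I2 impI)
      fix x assume "p x \<noteq> \<infinity>"
      then obtain q where q: "p x = ennreal q" "0 \<le> q" by (cases "p x") auto
      show "p x * ennreal (h x) \<le> ennreal (exp (g x - c))"
      proof (cases "q = 0")
        case True then show ?thesis using q by simp
      next
        case False
        then have qp: "0 < q" using q by simp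
        have hx: "h x = exp (g x - c) / q" using q by (simp add: h_def)
        have "q * h x = exp (g x - c)" using qp by (simp add: hx)
        moreover have "0 \<le> h x" using qp by (simp add: hx)
        ultimately have "p x * ennreal (h x) = ennreal (exp (g x - c))"
          using q by (metis ennreal_mult)
        then show ?thesis by simp
      qed
    qed
    also have "\<dots> = ennreal (\<integral>x. exp (g x - c) \<partial>Q)"
    proof (rule nn_integral_eq_integral)
      have "\<And>x. x \<in> space Q \<Longrightarrow> norm (exp (g x - c)) \<le> exp (C - c)"
        using gb by (simp add: abs_le_iff)
      then show "integrable Q (\<lambda>x. exp (g x - c))"
        by (intro Q.integrable_const_bound[where B="exp (C - c)"] AE_I2) auto
    qed simp
    also have "(\<integral>x. exp (g x - c) \<partial>Q) = (\<integral>x. exp (g x) / Z \<partial>Q)"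
      using Zpos by (simp add: c_def exp_diff)
    also have "\<dots> = 1" using Zpos by (simp add: Z_def)
    finally show ?thesis by simp
  qed
  have inth: "integrable P h"
    by (rule integrableI_nonneg) (use nnh in \<open>auto simp: h_def intro!: AE_I2 top.not_eq_extremum
         intro: le_less_trans\<close>)
  have h1: "(\<integral>x. h x \<partial>P) \<le> 1"
  proof -
    have "(\<integral>x. h x \<partial>P) = enn2real (\<integral>\<^sup>+x. ennreal (h x) \<partial>P)"
      by (rule integral_eq_nn_integral) (auto simp: h_def[symmetric] intro!: AE_I2, simp add: h_def)
    also have "\<dots> \<le> 1" using nnh
      by (metis enn2real_1 enn2real_mono ennreal_one_less_top)
    finally show ?thesis .
  qed
  have ent: "entropy_density (exp 1) Q P x = ln (enn2real (p x))" for x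
    by (simp add: entropy_density_def p_def log_def)
  have "(\<integral>x. g x - c - entropy_density (exp 1) Q P x \<partial>P) \<le> (\<integral>x. h x - 1 \<partial>P)"
  proof (rule integral_mono_AE)
    show "integrable P (\<lambda>x. g x - c - entropy_density (exp 1) Q P x)"
      using intgP int by auto
    show "integrable P (\<lambda>x. h x - 1)" using inth by auto
    show "AE x in P. g x - c - entropy_density (exp 1) Q P x \<le> h x - 1"
    proof (rule AE_mp[OF AEpos], intro AE_I2 impI)
      fix x assume q: "0 < enn2real (p x)"
      have "ln (h x) \<le> h x - 1" by (rule ln_le_minus_one) (use q in \<open>simp add: h_def\<close>)
      moreover have "ln (h x) = g x - c - ln (enn2real (p x))"
        using q by (simp add: h_def ln_div)
      ultimately show "g x - c - entropy_density (exp 1) Q P x \<le> h x - 1" by (simp add: ent)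
    qed
  qed
  also have "\<dots> \<le> 0" using h1 inth by (simp add: P.prob_space)
  finally have "(\<integral>x. g x \<partial>P) - c - KL_divergence (exp 1) Q P \<le> 0"
    using intgP int by (simp add: KL_divergence_def P.prob_space)
  then show ?thesis by (simp add: c_def Z_def)
qed


lemma DVH:
  fixes u :: "'a \<Rightarrow> real"
  assumes P: "prob_space P" and Q: "prob_space Q" and sPQ: "sets P = sets Q"
    and ac: "absolutely_continuous Q P"
    and int: "integrable P (entropy_density (exp 1) Q P)"
    and u[measurable]: "u \<in> borel_measurable Q" and ub: "\<And>x. x \<in> space Q \<Longrightarrow> a \<le> u x \<and> u x \<le> a + B'"
    and l: "0 < l"
  shows "l * ((\<integral>x. u x \<partial>Q) - (\<integral>x. u x \<partial>P)) \<le> KL_divergence (exp 1) Q P + l\<^sup>2 * B'\<^sup>2 / 8"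
proof -
  interpret Q: prob_space Q by fact
  interpret P: prob_space P by fact
  have spP: "space P = space Q" using sPQ by (rule sets_eq_imp_space_eq)
  have uP[measurable]: "u \<in> borel_measurable P" using sPQ by (simp cong: measurable_cong_sets)
  have intuQ: "integrable Q u"
    by (rule Q.integrable_const_bound[where B="\<bar>a\<bar> + \<bar>B'\<bar>"]) (auto intro!: AE_I2 dest!: ub)
  have intuP: "integrable P u"
    by (rule P.integrable_const_bound[where B="\<bar>a\<bar> + \<bar>B'\<bar>"]) (auto intro!: AE_I2 dest!: ub simp: spP)
  define EQ where "EQ = (\<integral>x. u x \<partial>Q)"
  define g where "g x = l * (EQ - u x)" for x
  have [measurable]: "g \<in> borel_measurable Q" unfolding g_def by measurable
  have gb: "\<bar>g x\<bar> \<le> l * (\<bar>EQ\<bar> + \<bar>a\<bar> + \<bar>B'\<bar>)" if "x \<in> space Q" for x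
  proof -
    have "\<bar>EQ - u x\<bar> \<le> \<bar>EQ\<bar> + \<bar>a\<bar> + \<bar>B'\<bar>" using ub[OF that] by linarith
    then show ?thesis using l by (simp add: g_def abs_mult)
  qed
  have dv: "(\<integral>x. g x \<partial>P) \<le> KL_divergence (exp 1) Q P + ln (\<integral>x. exp (g x) \<partial>Q)"
    by (rule DV[OF P Q sPQ ac int]) (auto intro: gb)
  interpret ib: interval_bounded_random_variable Q "\<lambda>x. - u x" "-a-B'" "-a"
    by unfold_locales (auto intro!: AE_I2 dest!: ub)
  have hf: "(\<integral>\<^sup>+x. exp (l * (- u x - (\<integral>x. - u x \<partial>Q))) \<partial>Q) \<le> ennreal (exp (l\<^sup>2 * (- a - (- a - B'))\<^sup>2 / 8))"
    by (rule ib.Hoeffdings_lemma_nn_integral[OF l])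
  have eqg: "\<And>x. l * (- u x - (\<integral>x. - u x \<partial>Q)) = g x" by (simp add: g_def EQ_def algebra_simps)
  have intg: "integrable Q (\<lambda>x. exp (g x))"
    by (rule Q.integrable_const_bound[where B="exp (l * (\<bar>EQ\<bar> + \<bar>a\<bar> + \<bar>B'\<bar>))"])
       (auto intro!: AE_I2 dest!: gb simp: abs_le_iff)
  have "ennreal (\<integral>x. exp (g x) \<partial>Q) = (\<integral>\<^sup>+x. exp (g x) \<partial>Q)"
    by (rule nn_integral_eq_integral[symmetric]) (auto intro: intg)
  also have "\<dots> \<le> ennreal (exp (l\<^sup>2 * B'\<^sup>2 / 8))" using hf by (simp add: g_def EQ_def)
  finally have "(\<integral>x. exp (g x) \<partial>Q) \<le> exp (l\<^sup>2 * B'\<^sup>2 / 8)" by (simp add: ennreal_le_iff2)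
  moreover have "0 < (\<integral>x. exp (g x) \<partial>Q)"
  proof -
    have "(\<integral>x. exp (- l * (\<bar>EQ\<bar> + \<bar>a\<bar> + \<bar>B'\<bar>)) \<partial>Q) \<le> (\<integral>x. exp (g x) \<partial>Q)"
      by (rule integral_mono[OF _ intg]) (auto dest!: gb simp: abs_le_iff)
    then show ?thesis by (simp add: Q.prob_space) (meson exp_gt_zero less_le_trans)
  qed
  ultimately have "ln (\<integral>x. exp (g x) \<partial>Q) \<le> l\<^sup>2 * B'\<^sup>2 / 8"
    by (metis ln_exp ln_le_cancel_iff exp_gt_zero)
  moreover have "(\<integral>x. g x \<partial>P) = l * ((\<integral>x. u x \<partial>Q) - (\<integral>x. u x \<partial>P))"
    using intuP by (simp add: g_def EQ_def P.prob_space algebra_simps)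
  ultimately show ?thesis using dv by linarith
qed


abbreviation Om :: "nat \<Rightarrow> real \<Rightarrow> ((nat \<Rightarrow> real) \<times> (nat \<Rightarrow> real)) measure" where
  "Om T B \<equiv> Dsp T B \<Otimes>\<^sub>M Xsp T"

lemma space_Dsp: "space (Dsp T B) = PiE {1..T} (\<lambda>_. {0..B})"
  by (simp add: Dsp_def space_PiM space_restrict_space)

lemma space_Xsp: "space (Xsp T) = PiE {1..T} (\<lambda>_. UNIV)"
  by (simp add: Xsp_def space_PiM)

lemma space_Hsp: "space (Hsp t) = PiE {1..<t} (\<lambda>_. UNIV)"
  by (simp add: Hsp_def space_PiM space_pair_measure)

lemma space_Om: "space (Om T B) = space (Dsp T B) \<times> space (Xsp T)"
  by (simp add: space_pair_measure)

lemma meas_Dsp_comp: "s \<in> {1..T} \<Longrightarrow> (\<lambda>d. d s) \<in> borel_measurable (Dsp T B)"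
proof -
  assume s: "s \<in> {1..T}"
  have 1: "(\<lambda>d. d s) \<in> Dsp T B \<rightarrow>\<^sub>M restrict_space borel {0..B}"
    unfolding Dsp_def by (rule measurable_component_singleton) (use s in auto)
  have 2: "(\<lambda>x. x) \<in> restrict_space borel {0..B} \<rightarrow>\<^sub>M (borel::real measure)"
    by (rule measurable_restrict_space1) simp
  from measurable_compose[OF 1 2] show ?thesis .
qed

lemma meas_Xsp_comp: "s \<in> {1..T} \<Longrightarrow> (\<lambda>d. d s) \<in> borel_measurable (Xsp T)"
  unfolding Xsp_def by (rule measurable_component_singleton) auto

lemma meas_fst_comp[measurable]: "s \<in> {1..T} \<Longrightarrow> (\<lambda>\<omega>. fst \<omega> s) \<in> borel_measurable (Om T B)"
  by (rule measurable_compose[OF measurable_fst meas_Dsp_comp])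

lemma meas_snd_comp[measurable]: "s \<in> {1..T} \<Longrightarrow> (\<lambda>\<omega>. snd \<omega> s) \<in> borel_measurable (Om T B)"
  by (rule measurable_compose[OF measurable_snd meas_Xsp_comp])

lemma Hmap_meas: "t \<le> Suc T \<Longrightarrow> Hmap t \<in> Om T B \<rightarrow>\<^sub>M Hsp t"
  unfolding Hmap_def hist_def Hsp_def psi_def
proof (rule measurable_restrict)
  fix s assume t: "t \<le> Suc T" and s: "s \<in> {1..<t}"
  then have s': "s \<in> {1..T}" by auto
  note [measurable] = meas_fst_comp[OF s'] meas_snd_comp[OF s']
  show "(\<lambda>\<omega>. (snd \<omega> s, min (fst \<omega> s) (snd \<omega> s), fst \<omega> s \<le> snd \<omega> s))
     \<in> Om T B \<rightarrow>\<^sub>M borel \<Otimes>\<^sub>M borel \<Otimes>\<^sub>M count_space UNIV"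
    by measurable
qed

lemma Hmap_upd: "t \<le> j \<Longrightarrow> Hmap t (fst \<omega>, (snd \<omega>)(j := x)) = Hmap t \<omega>"
  by (auto simp: Hmap_def hist_def)

lemma card_sum_ind: fixes T :: nat shows "real (card {s\<in>{1..T}. d s \<le> y}) = (\<Sum>s\<in>{1..T}. if d s \<le> y then 1 else 0)"
proof -
  have "real (card {s\<in>{1..T}. d s \<le> y}) = (\<Sum>s\<in>{s\<in>{1..T}. d s \<le> y}. 1)" by simp
  also have "\<dots> = (\<Sum>s\<in>{1..T}. if d s \<le> y then 1 else 0)" by (rule sum.inter_filter) simp
  finally show ?thesis .
qed

lemma xhat_char:
  assumes T: "1 \<le> T" and g: "0 < gam" "gam \<le> 1"
  shows "xhat T gam d \<le> y \<longleftrightarrow> gam \<le> real (card {s\<in>{1..T}. d s \<le> y}) / real T"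
proof -
  define F where "F x = real (card {s\<in>{1..T}. d s \<le> x}) / real T" for x
  define S where "S = {x. gam \<le> F x}"
  define D where "D = d ` {1..T}"
  have Fmono: "F x \<le> F z" if "x \<le> z" for x z
  proof -
    have "card {s\<in>{1..T}. d s \<le> x} \<le> card {s\<in>{1..T}. d s \<le> z}"
      by (rule card_mono) (use that in auto)
    then show ?thesis unfolding F_def by (simp add: divide_right_mono)
  qed
  have up: "x \<in> S \<Longrightarrow> x \<le> z \<Longrightarrow> z \<in> S" for x z using Fmono unfolding S_def by (auto intro: order_trans)
  have finD: "finite D" unfolding D_def by simp
  have key: "\<exists>m\<in>S \<inter> D. m \<le> x" if x: "x \<in> S" for x
  proof -
    have "F x > 0" using x g unfolding S_def by auto
    have ne: "{s\<in>{1..T}. d s \<le> x} \<noteq> {}"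
    proof
      assume e: "{s\<in>{1..T}. d s \<le> x} = {}"
      have "F x = 0" unfolding F_def e by simp
      with \<open>F x > 0\<close> show False by simp
    qed
    define m where "m = Max (d ` {s\<in>{1..T}. d s \<le> x})"
    have mD: "m \<in> d ` {s\<in>{1..T}. d s \<le> x}" unfolding m_def using ne by (intro Max_in) auto
    have mx: "m \<le> x" using mD by auto
    have "{s\<in>{1..T}. d s \<le> m} = {s\<in>{1..T}. d s \<le> x}"
    proof
      show "{s\<in>{1..T}. d s \<le> m} \<subseteq> {s\<in>{1..T}. d s \<le> x}" using mx by auto
      show "{s\<in>{1..T}. d s \<le> x} \<subseteq> {s\<in>{1..T}. d s \<le> m}"
        unfolding m_def by (auto intro!: Max_ge)
    qed
    then have "F m = F x" unfolding F_def by simp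
    then have "m \<in> S" using x unfolding S_def by simp
    moreover have "m \<in> D" using mD unfolding D_def by auto
    ultimately show ?thesis using mx by blast
  qed
  have F1: "F (Max D) = 1"
  proof -
    have "{s\<in>{1..T}. d s \<le> Max D} = {1..T}" using finD by (auto simp: D_def intro!: Max_ge)
    then show ?thesis using T by (simp add: F_def)
  qed
  have "Max D \<in> S" using F1 g by (simp add: S_def)
  then obtain m0 where m0: "m0 \<in> S \<inter> D" using key by blast
  define q where "q = Min (S \<inter> D)"
  have qS: "q \<in> S \<inter> D" unfolding q_def using m0 finD by (intro Min_in) auto
  have qle: "q \<le> x" if "x \<in> S" for x
  proof -
    from key[OF that] obtain m where "m \<in> S \<inter> D" "m \<le> x" by blast
    moreover have "q \<le> m" unfolding q_def using \<open>m \<in> S \<inter> D\<close> finD by (intro Min_le) auto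
    ultimately show ?thesis by simp
  qed
  have "Inf S = q"
  proof (rule antisym)
    show "Inf S \<le> q" using qS qle by (intro cInf_lower) (auto simp: bdd_below_def)
    show "q \<le> Inf S" using qS by (intro cInf_greatest qle) auto
  qed
  then have xh: "xhat T gam d = q" by (simp add: xhat_def S_def F_def)
  show ?thesis
  proof
    assume "xhat T gam d \<le> y"
    then have "y \<in> S" using up[of q y] qS xh by auto
    then show "gam \<le> real (card {s\<in>{1..T}. d s \<le> y}) / real T" by (simp add: S_def F_def)
  next
    assume "gam \<le> real (card {s\<in>{1..T}. d s \<le> y}) / real T"
    then have "y \<in> S" by (simp add: S_def F_def)
    then show "xhat T gam d \<le> y" using qle xh by simp
  qed
qed

lemma xhat_meas:
  assumes T: "1 \<le> T" and g: "0 < gam" "gam \<le> 1"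
  shows "xhat T gam \<in> borel_measurable (Dsp T B)"
proof (subst borel_measurable_iff_le, intro allI)
  fix y
  have [measurable]: "(\<lambda>d. \<Sum>s\<in>{1..T}. if d s \<le> y then 1 else 0::real) \<in> borel_measurable (Dsp T B)"
  proof (rule borel_measurable_sum)
    fix s assume "s \<in> {1..T}"
    note [measurable] = meas_Dsp_comp[OF this, where B=B]
    show "(\<lambda>d. if d s \<le> y then 1 else 0::real) \<in> borel_measurable (Dsp T B)" by measurable
  qed
  have "{w \<in> space (Dsp T B). xhat T gam w \<le> y} =
        {w \<in> space (Dsp T B). gam \<le> (\<Sum>s\<in>{1..T}. if w s \<le> y then 1 else 0) / real T}"
    by (simp only: xhat_char[OF assms] card_sum_ind)
  also have "\<dots> \<in> sets (Dsp T B)" by measurable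
  finally show "{w \<in> space (Dsp T B). xhat T gam w \<le> y} \<in> sets (Dsp T B)" .
qed



lemma act_meas:
  assumes T: "1 \<le> T" and g: "0 < gam" "gam \<le> 1"
    and Qt: "Q t \<in> Hsp t \<rightarrow>\<^sub>M prob_algebra (Dsp T B)"
  shows "act T gam Q t \<in> Hsp t \<rightarrow>\<^sub>M prob_algebra borel"
  unfolding act_def
  by (rule measurable_compose[OF Qt measurable_distr_prob_space[OF xhat_meas[OF T g]]])

lemma upd_meas:
  assumes k: "k \<in> {1..T}"
  shows "(\<lambda>(\<omega>, x). (fst \<omega>, (snd \<omega>)(k := x))) \<in> Om T B \<Otimes>\<^sub>M borel \<rightarrow>\<^sub>M Om T B"
proof -
  have 1: "(\<lambda>p. fst (fst p)) \<in> Om T B \<Otimes>\<^sub>M borel \<rightarrow>\<^sub>M Dsp T B" by measurable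
  have 2: "(\<lambda>p. (snd (fst p))(k := snd p)) \<in> Om T B \<Otimes>\<^sub>M (borel::real measure) \<rightarrow>\<^sub>M Xsp T"
  proof (rule measurable_cong[THEN iffD1])
    have "(\<lambda>p. \<lambda>i\<in>{1..T}. if i = k then snd p else snd (fst p) i) \<in> Om T B \<Otimes>\<^sub>M (borel::real measure) \<rightarrow>\<^sub>M (\<Pi>\<^sub>M s\<in>{1..T}. (borel :: real measure))"
    proof (rule measurable_restrict)
      fix i assume i: "i \<in> {1..T}"
      have [measurable]: "(\<lambda>p. snd (fst p) i) \<in> Om T B \<Otimes>\<^sub>M (borel::real measure) \<rightarrow>\<^sub>M borel"
        by (rule measurable_compose[OF measurable_fst meas_snd_comp[OF i]])
      show "(\<lambda>p. if i = k then snd p else snd (fst p) i) \<in> Om T B \<Otimes>\<^sub>M (borel::real measure) \<rightarrow>\<^sub>M borel"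
        by (cases "i = k") simp_all
    qed
    then show "(\<lambda>p. \<lambda>i\<in>{1..T}. if i = k then snd p else snd (fst p) i) \<in> Om T B \<Otimes>\<^sub>M (borel::real measure) \<rightarrow>\<^sub>M Xsp T"
      unfolding Xsp_def .
    fix p assume "p \<in> space (Om T B \<Otimes>\<^sub>M (borel::real measure))"
    then have "snd (fst p) \<in> PiE {1..T} (\<lambda>_. UNIV)" by (auto simp: space_pair_measure space_Xsp)
    then show "(\<lambda>i\<in>{1..T}. if i = k then snd p else snd (fst p) i) = (snd (fst p))(k := snd p)"
      using k by (auto simp: fun_eq_iff PiE_def extensional_def)
  qed
  have "(\<lambda>p. (fst (fst p), (snd (fst p))(k := snd p))) \<in> Om T B \<Otimes>\<^sub>M borel \<rightarrow>\<^sub>M Om T B"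
    by (rule measurable_Pair[OF 1 2])
  then show ?thesis by (simp add: case_prod_beta')
qed

definition Kn :: "nat \<Rightarrow> real \<Rightarrow> real \<Rightarrow> (nat \<Rightarrow> (nat \<Rightarrow> real \<times> real \<times> bool) \<Rightarrow> (nat \<Rightarrow> real) measure)
    \<Rightarrow> nat \<Rightarrow> ((nat \<Rightarrow> real) \<times> (nat \<Rightarrow> real)) \<Rightarrow> ((nat \<Rightarrow> real) \<times> (nat \<Rightarrow> real)) measure" where
  "Kn T B gam Q j \<omega> = distr (act T gam Q j (Hmap j \<omega>)) (Om T B) (\<lambda>x. (fst \<omega>, (snd \<omega>)(j := x)))"

lemma ilaw_Suc: "ilaw T B gam P Q (Suc k) = ilaw T B gam P Q k \<bind> Kn T B gam Q (Suc k)"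
  by (simp add: Kn_def[abs_def])

lemma Kn_meas:
  assumes T: "1 \<le> T" and g: "0 < gam" "gam \<le> 1" and j: "j \<in> {1..T}"
    and Qt: "Q j \<in> Hsp j \<rightarrow>\<^sub>M prob_algebra (Dsp T B)"
  shows "Kn T B gam Q j \<in> Om T B \<rightarrow>\<^sub>M prob_algebra (Om T B)"
  unfolding Kn_def
proof (rule measurable_distr_prob_space2)
  show "(\<lambda>\<omega>. act T gam Q j (Hmap j \<omega>)) \<in> Om T B \<rightarrow>\<^sub>M prob_algebra borel"
    by (rule measurable_compose[OF Hmap_meas act_meas[where Q=Q and t=j, OF T g Qt]]) (use j in auto)
  show "(\<lambda>(\<omega>, x). (fst \<omega>, (snd \<omega>)(j := x))) \<in> Om T B \<Otimes>\<^sub>M borel \<rightarrow>\<^sub>M Om T B"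
    by (rule upd_meas[OF j])
qed

lemma ilaw0_meas: "(\<lambda>d. (d, \<lambda>s\<in>{1..T}. 0::real)) \<in> Dsp T B \<rightarrow>\<^sub>M Om T B"
  by (rule measurable_Pair[OF measurable_ident_sets[OF refl] measurable_const])
     (auto simp: space_Xsp)

lemma ilaw_space:
  assumes T: "1 \<le> T" and g: "0 < gam" "gam \<le> 1"
    and P: "prob_space P" "sets P = sets (Dsp T B)"
    and Q: "\<forall>t\<in>{1..T}. Q t \<in> Hsp t \<rightarrow>\<^sub>M prob_algebra (Dsp T B)"
  shows "k \<le> T \<Longrightarrow> ilaw T B gam P Q k \<in> space (prob_algebra (Om T B))"
proof (induction k)
  case 0
  have m: "(\<lambda>d. (d, \<lambda>s\<in>{1..T}. 0::real)) \<in> P \<rightarrow>\<^sub>M Om T B"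
    using ilaw0_meas P(2) by (simp cong: measurable_cong_sets)
  show ?case using prob_space.prob_space_distr[OF P(1) m] by (simp add: space_prob_algebra)
next
  case (Suc k)
  then have IH: "ilaw T B gam P Q k \<in> space (prob_algebra (Om T B))" by simp
  have K: "Kn T B gam Q (Suc k) \<in> Om T B \<rightarrow>\<^sub>M prob_algebra (Om T B)"
    using Suc.prems Q by (intro Kn_meas[OF T g]) auto
  show ?case unfolding ilaw_Suc space_prob_algebra
    using prob_space_bind'[OF IH K] sets_bind'[OF IH K] by simp
qed



locale setting =
  fixes T :: nat and B gam :: real and P :: "(nat \<Rightarrow> real) measure"
    and Q :: "nat \<Rightarrow> (nat \<Rightarrow> real \<times> real \<times> bool) \<Rightarrow> (nat \<Rightarrow> real) measure"
  assumes T: "1 \<le> T" and g: "0 < gam" "gam \<le> 1"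
    and P: "prob_space P" "sets P = sets (Dsp T B)"
    and Q: "\<forall>t\<in>{1..T}. Q t \<in> Hsp t \<rightarrow>\<^sub>M prob_algebra (Dsp T B)"
begin

abbreviation "L \<equiv> ilaw T B gam P Q"

lemma L_space: "k \<le> T \<Longrightarrow> L k \<in> space (prob_algebra (Om T B))"
  by (rule ilaw_space[OF T g P Q])

lemma L_sets: "k \<le> T \<Longrightarrow> sets (L k) = sets (Om T B)"
  using L_space by (simp add: space_prob_algebra)

lemma L_spc: "k \<le> T \<Longrightarrow> space (L k) = space (Om T B)"
  using L_sets by (rule sets_eq_imp_space_eq)

lemma L_prob: "k \<le> T \<Longrightarrow> prob_space (L k)"
  using L_space by (simp add: space_prob_algebra)

lemma K_meas: "j \<in> {1..T} \<Longrightarrow> Kn T B gam Q j \<in> Om T B \<rightarrow>\<^sub>M prob_algebra (Om T B)"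
  using Q by (intro Kn_meas[OF T g]) auto

lemma act_m: "t \<in> {1..T} \<Longrightarrow> act T gam Q t \<in> Hsp t \<rightarrow>\<^sub>M prob_algebra borel"
  using Q by (intro act_meas[OF T g]) auto

lemma Qsp: "t \<in> {1..T} \<Longrightarrow> h \<in> space (Hsp t) \<Longrightarrow> sets (Q t h) = sets (Dsp T B) \<and> prob_space (Q t h)"
  using measurable_space[of "Q t" "Hsp t" "prob_algebra (Dsp T B)" h] Q
  by (auto simp: space_prob_algebra)

lemma actsp: "t \<in> {1..T} \<Longrightarrow> h \<in> space (Hsp t) \<Longrightarrow> sets (act T gam Q t h) = sets borel \<and> prob_space (act T gam Q t h)"
  using measurable_space[OF act_m, of t h] by (auto simp: space_prob_algebra)

lemma Hmap_sp: "t \<le> Suc T \<Longrightarrow> \<omega> \<in> space (Om T B) \<Longrightarrow> Hmap t \<omega> \<in> space (Hsp t)"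
  using measurable_space[OF Hmap_meas] by blast

lemma upd_m: "j \<in> {1..T} \<Longrightarrow> \<omega> \<in> space (Om T B) \<Longrightarrow> (\<lambda>x. (fst \<omega>, (snd \<omega>)(j := x))) \<in> borel \<rightarrow>\<^sub>M Om T B"
  using measurable_compose_Pair1[OF _ upd_meas] by simp

lemma integral_Kn:
  assumes j: "j \<in> {1..T}" and \<omega>: "\<omega> \<in> space (Om T B)"
    and f[measurable]: "(f :: _ \<Rightarrow> real) \<in> borel_measurable (Om T B)"
  shows "(\<integral>y. f y \<partial>Kn T B gam Q j \<omega>) = (\<integral>x. f (fst \<omega>, (snd \<omega>)(j := x)) \<partial>act T gam Q j (Hmap j \<omega>))"
proof -
  have H: "Hmap j \<omega> \<in> space (Hsp j)" using j \<omega> by (intro Hmap_sp) auto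
  have m: "(\<lambda>x. (fst \<omega>, (snd \<omega>)(j := x))) \<in> act T gam Q j (Hmap j \<omega>) \<rightarrow>\<^sub>M Om T B"
    using upd_m[OF j \<omega>] actsp[OF j H] by (simp cong: measurable_cong_sets)
  show ?thesis unfolding Kn_def by (rule integral_distr[OF m f])
qed

lemma marg_step:
  assumes k: "Suc k \<le> T" and f[measurable]: "(f :: _ \<Rightarrow> real) \<in> borel_measurable (Om T B)"
    and fb: "\<And>\<omega>. \<omega> \<in> space (Om T B) \<Longrightarrow> \<bar>f \<omega>\<bar> \<le> C"
    and inv: "\<And>\<omega> x. \<omega> \<in> space (Om T B) \<Longrightarrow> f (fst \<omega>, (snd \<omega>)(Suc k := x)) = f \<omega>"
  shows "(\<integral>\<omega>. f \<omega> \<partial>L (Suc k)) = (\<integral>\<omega>. f \<omega> \<partial>L k)"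
proof -
  have j: "Suc k \<in> {1..T}" using k by auto
  have Km: "Kn T B gam Q (Suc k) \<in> L k \<rightarrow>\<^sub>M subprob_algebra (Om T B)"
    using measurable_prob_algebraD[OF K_meas[OF j]] L_sets[of k] k by (simp cong: measurable_cong_sets)
  interpret Lk: prob_space "L k" using L_prob[of k] k by simp
  have fin: "finite_measure (L k)" by unfold_locales
  have ae: "AE x in L k. emeasure (Kn T B gam Q (Suc k) x) (space (Kn T B gam Q (Suc k) x)) \<le> ennreal 1"
  proof (rule AE_I2)
    fix x assume "x \<in> space (L k)"
    then have "x \<in> space (Om T B)" using L_spc[of k] k by simp
    then have "Kn T B gam Q (Suc k) x \<in> space (prob_algebra (Om T B))"
      using measurable_space[OF K_meas[OF j]] by blast
    then show "emeasure (Kn T B gam Q (Suc k) x) (space (Kn T B gam Q (Suc k) x)) \<le> ennreal 1"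
      by (simp add: space_prob_algebra prob_space.emeasure_space_1)
  qed
  have "(\<integral>\<omega>. f \<omega> \<partial>L (Suc k)) = (\<integral>\<omega>. (\<integral>y. f y \<partial>Kn T B gam Q (Suc k) \<omega>) \<partial>L k)"
    unfolding ilaw_Suc by (rule integral_bind[OF f fb Km fin ae])
  also have "\<dots> = (\<integral>\<omega>. f \<omega> \<partial>L k)"
  proof (intro Bochner_Integration.integral_cong refl)
    fix \<omega> assume "\<omega> \<in> space (L k)"
    then have \<omega>: "\<omega> \<in> space (Om T B)" using L_spc[of k] k by simp
    have H: "Hmap (Suc k) \<omega> \<in> space (Hsp (Suc k))" using j \<omega> by (intro Hmap_sp) auto
    interpret A: prob_space "act T gam Q (Suc k) (Hmap (Suc k) \<omega>)" using actsp[OF j H] by simp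
    show "(\<integral>y. f y \<partial>Kn T B gam Q (Suc k) \<omega>) = f \<omega>"
      using integral_Kn[OF j \<omega> f] by (simp add: inv[OF \<omega>] A.prob_space)
  qed
  finally show ?thesis .
qed

definition dep_upto :: "nat \<Rightarrow> (((nat \<Rightarrow> real) \<times> (nat \<Rightarrow> real)) \<Rightarrow> real) \<Rightarrow> bool" where
  "dep_upto t f \<longleftrightarrow> (\<forall>\<omega>\<in>space (Om T B). \<forall>j x. t < j \<longrightarrow> j \<le> T \<longrightarrow> f (fst \<omega>, (snd \<omega>)(j := x)) = f \<omega>)"

lemma marg:
  assumes f[measurable]: "(f :: _ \<Rightarrow> real) \<in> borel_measurable (Om T B)"
    and fb: "\<And>\<omega>. \<omega> \<in> space (Om T B) \<Longrightarrow> \<bar>f \<omega>\<bar> \<le> C"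
    and dep: "dep_upto t f"
  shows "t \<le> m \<Longrightarrow> m \<le> T \<Longrightarrow> (\<integral>\<omega>. f \<omega> \<partial>L m) = (\<integral>\<omega>. f \<omega> \<partial>L t)"
proof (induction m)
  case 0 then show ?case by simp
next
  case (Suc m)
  show ?case
  proof (cases "t = Suc m")
    case True then show ?thesis by simp
  next
    case False
    then have "t \<le> m" using Suc.prems by simp
    have "(\<integral>\<omega>. f \<omega> \<partial>L (Suc m)) = (\<integral>\<omega>. f \<omega> \<partial>L m)"
      by (rule marg_step[OF Suc.prems(2) f fb]) (use dep \<open>t \<le> m\<close> Suc.prems in \<open>auto simp: dep_upto_def\<close>)
    also have "\<dots> = (\<integral>\<omega>. f \<omega> \<partial>L t)" using Suc.IH \<open>t \<le> m\<close> Suc.prems by simp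
    finally show ?thesis .
  qed
qed

end


lemma bnd_int:
  fixes f :: "'a \<Rightarrow> real"
  assumes "prob_space M" "f \<in> borel_measurable M" "\<And>x. x \<in> space M \<Longrightarrow> \<bar>f x\<bar> \<le> C"
  shows "\<bar>\<integral>x. f x \<partial>M\<bar> \<le> C" "integrable M f"
proof -
  interpret prob_space M by fact
  show i: "integrable M f" by (rule integrable_const_bound[where B=C]) (use assms in auto)
  have "(\<integral>x. f x \<partial>M) \<le> C" by (rule integral_le_const[OF i]) (use assms in \<open>auto simp: abs_le_iff\<close>)
  moreover have "-C \<le> (\<integral>x. f x \<partial>M)"
  proof (rule integral_ge_const[OF i], rule AE_I2)
    fix x assume "x \<in> space M" then show "-C \<le> f x" using assms(3)[of x] by (simp add: abs_le_iff)
  qed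
  ultimately show "\<bar>\<integral>x. f x \<partial>M\<bar> \<le> C" by simp
qed

context setting begin

lemma bind_int:
  assumes k: "Suc k \<le> T" and f[measurable]: "(f :: _ \<Rightarrow> real) \<in> borel_measurable (Om T B)"
    and fb: "\<And>\<omega>. \<omega> \<in> space (Om T B) \<Longrightarrow> \<bar>f \<omega>\<bar> \<le> C"
  shows "(\<integral>\<omega>. f \<omega> \<partial>L (Suc k)) = (\<integral>\<omega>. (\<integral>y. f y \<partial>Kn T B gam Q (Suc k) \<omega>) \<partial>L k)"
proof -
  have j: "Suc k \<in> {1..T}" using k by auto
  have Km: "Kn T B gam Q (Suc k) \<in> L k \<rightarrow>\<^sub>M subprob_algebra (Om T B)"
    using measurable_prob_algebraD[OF K_meas[OF j]] L_sets[of k] k by (simp cong: measurable_cong_sets)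
  interpret Lk: prob_space "L k" using L_prob[of k] k by simp
  have fin: "finite_measure (L k)" by unfold_locales
  have ae: "AE x in L k. emeasure (Kn T B gam Q (Suc k) x) (space (Kn T B gam Q (Suc k) x)) \<le> ennreal 1"
  proof (rule AE_I2)
    fix x assume "x \<in> space (L k)"
    then have "x \<in> space (Om T B)" using L_spc[of k] k by simp
    then have "Kn T B gam Q (Suc k) x \<in> space (prob_algebra (Om T B))"
      using measurable_space[OF K_meas[OF j]] by blast
    then show "emeasure (Kn T B gam Q (Suc k) x) (space (Kn T B gam Q (Suc k) x)) \<le> ennreal 1"
      by (simp add: space_prob_algebra prob_space.emeasure_space_1)
  qed
  show ?thesis
    unfolding ilaw_Suc by (rule integral_bind[OF f fb Km fin ae])
qed

definition Gf :: "nat \<Rightarrow> (real \<Rightarrow> real) \<Rightarrow> (nat \<Rightarrow> real \<times> real \<times> bool) \<Rightarrow> real" where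
  "Gf t \<phi> h = (\<integral>d. \<phi> (xhat T gam d) \<partial>Q t h)"

lemma Gf_meas:
  assumes t: "t \<in> {1..T}" and phi[measurable]: "\<phi> \<in> borel_measurable borel"
  shows "Gf t \<phi> \<in> borel_measurable (Hsp t)"
proof -
  have [measurable]: "xhat T gam \<in> borel_measurable (Dsp T B)" by (rule xhat_meas[OF T g])
  have im: "(\<lambda>M. \<integral>d. \<phi> (xhat T gam d) \<partial>M) \<in> subprob_algebra (Dsp T B) \<rightarrow>\<^sub>M borel"
    by (rule integral_measurable_subprob_algebra) measurable
  have Qt: "Q t \<in> Hsp t \<rightarrow>\<^sub>M prob_algebra (Dsp T B)" using Q t by auto
  from measurable_compose[OF measurable_prob_algebraD[OF Qt] im]
  show ?thesis unfolding Gf_def[abs_def] by simp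
qed

lemma Gf_bnd:
  assumes t: "t \<in> {1..T}" and h: "h \<in> space (Hsp t)" and phi[measurable]: "\<phi> \<in> borel_measurable borel"
    and pb: "\<And>x. \<bar>\<phi> x\<bar> \<le> C"
  shows "\<bar>Gf t \<phi> h\<bar> \<le> C"
proof -
  have [measurable]: "xhat T gam \<in> borel_measurable (Dsp T B)" by (rule xhat_meas[OF T g])
  have s: "sets (Q t h) = sets (Dsp T B)" "prob_space (Q t h)" using Qsp[OF t h] by auto
  have m: "(\<lambda>d. \<phi> (xhat T gam d)) \<in> borel_measurable (Q t h)" using s(1) by (simp cong: measurable_cong_sets)
  show ?thesis unfolding Gf_def by (rule bnd_int[OF s(2) m]) (rule pb)
qed

lemma onestep:
  assumes t: "t \<in> {1..T}" and phi[measurable]: "\<phi> \<in> borel_measurable borel" and pb: "\<And>x. \<bar>\<phi> x\<bar> \<le> C1"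
    and psi[measurable]: "\<psi> \<in> borel_measurable (Hsp t)" and qb: "\<And>h. h \<in> space (Hsp t) \<Longrightarrow> \<bar>\<psi> h\<bar> \<le> C2"
    and C: "0 \<le> C2"
  shows "(\<integral>\<omega>. \<phi> (snd \<omega> t) * \<psi> (Hmap t \<omega>) \<partial>L t) = (\<integral>\<omega>. Gf t \<phi> (Hmap t \<omega>) * \<psi> (Hmap t \<omega>) \<partial>L (t - 1))"
proof -
  obtain k where k: "t = Suc k" using t by (cases t) auto
  have kT: "Suc k \<le> T" using t k by simp
  have [measurable]: "Hmap t \<in> Om T B \<rightarrow>\<^sub>M Hsp t" by (rule Hmap_meas) (use t in auto)
  have [measurable]: "(\<lambda>\<omega>. snd \<omega> t) \<in> borel_measurable (Om T B)" by (rule meas_snd_comp[OF t])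
  have f: "(\<lambda>\<omega>. \<phi> (snd \<omega> t) * \<psi> (Hmap t \<omega>)) \<in> borel_measurable (Om T B)" by measurable
  have fb: "\<bar>\<phi> (snd \<omega> t) * \<psi> (Hmap t \<omega>)\<bar> \<le> C1 * C2" if "\<omega> \<in> space (Om T B)" for \<omega>
  proof -
    have "\<bar>\<psi> (Hmap t \<omega>)\<bar> \<le> C2" by (rule qb) (rule Hmap_sp, use t that in auto)
    then show ?thesis using pb[of "snd \<omega> t"] by (simp add: abs_mult mult_mono)
  qed
  have "(\<integral>\<omega>. \<phi> (snd \<omega> t) * \<psi> (Hmap t \<omega>) \<partial>L t)
      = (\<integral>\<omega>. (\<integral>y. \<phi> (snd y t) * \<psi> (Hmap t y) \<partial>Kn T B gam Q t \<omega>) \<partial>L k)"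
    unfolding k by (rule bind_int[OF kT f[unfolded k] fb[unfolded k]])
  also have "\<dots> = (\<integral>\<omega>. Gf t \<phi> (Hmap t \<omega>) * \<psi> (Hmap t \<omega>) \<partial>L k)"
  proof (intro Bochner_Integration.integral_cong refl)
    fix \<omega> assume "\<omega> \<in> space (L k)"
    then have \<omega>: "\<omega> \<in> space (Om T B)" using L_spc[of k] kT by simp
    have H: "Hmap t \<omega> \<in> space (Hsp t)" using t \<omega> by (intro Hmap_sp) auto
    have s: "sets (Q t (Hmap t \<omega>)) = sets (Dsp T B)" "prob_space (Q t (Hmap t \<omega>))" using Qsp[OF t H] by auto
    have [measurable]: "xhat T gam \<in> borel_measurable (Dsp T B)" by (rule xhat_meas[OF T g])
    have xm: "xhat T gam \<in> Q t (Hmap t \<omega>) \<rightarrow>\<^sub>M borel" using s(1) by (simp cong: measurable_cong_sets)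
    have "(\<integral>y. \<phi> (snd y t) * \<psi> (Hmap t y) \<partial>Kn T B gam Q t \<omega>)
        = (\<integral>x. \<phi> x * \<psi> (Hmap t \<omega>) \<partial>act T gam Q t (Hmap t \<omega>))"
      using integral_Kn[OF t \<omega> f] by (simp add: Hmap_upd)
    also have "\<dots> = (\<integral>x. \<phi> x \<partial>act T gam Q t (Hmap t \<omega>)) * \<psi> (Hmap t \<omega>)" by simp
    also have "(\<integral>x. \<phi> x \<partial>act T gam Q t (Hmap t \<omega>)) = Gf t \<phi> (Hmap t \<omega>)"
      unfolding act_def Gf_def by (rule integral_distr[OF xm phi])
    finally show "(\<integral>y. \<phi> (snd y t) * \<psi> (Hmap t y) \<partial>Kn T B gam Q t \<omega>) = Gf t \<phi> (Hmap t \<omega>) * \<psi> (Hmap t \<omega>)" .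
  qed
  finally show ?thesis using k by simp
qed

lemma main_id:
  assumes t: "t \<in> {1..T}" and phi[measurable]: "\<phi> \<in> borel_measurable borel" and pb: "\<And>x. \<bar>\<phi> x\<bar> \<le> C1"
    and psi[measurable]: "\<psi> \<in> borel_measurable (Hsp t)" and qb: "\<And>h. h \<in> space (Hsp t) \<Longrightarrow> \<bar>\<psi> h\<bar> \<le> C2"
    and C: "0 \<le> C2"
  shows "(\<integral>\<omega>. \<phi> (snd \<omega> t) * \<psi> (Hmap t \<omega>) \<partial>L T) = (\<integral>\<omega>. Gf t \<phi> (Hmap t \<omega>) * \<psi> (Hmap t \<omega>) \<partial>L T)"
proof -
  have [measurable]: "Hmap t \<in> Om T B \<rightarrow>\<^sub>M Hsp t" by (rule Hmap_meas) (use t in auto)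
  have [measurable]: "(\<lambda>\<omega>. snd \<omega> t) \<in> borel_measurable (Om T B)" by (rule meas_snd_comp[OF t])
  have [measurable]: "Gf t \<phi> \<in> borel_measurable (Hsp t)" by (rule Gf_meas[OF t phi])
  have Hs: "\<omega> \<in> space (Om T B) \<Longrightarrow> Hmap t \<omega> \<in> space (Hsp t)" for \<omega> by (rule Hmap_sp) (use t in auto)
  have fb: "\<bar>\<phi> (snd \<omega> t) * \<psi> (Hmap t \<omega>)\<bar> \<le> C1 * C2" if "\<omega> \<in> space (Om T B)" for \<omega>
    using pb[of "snd \<omega> t"] qb[OF Hs[OF that]] by (simp add: abs_mult mult_mono)
  have gb: "\<bar>Gf t \<phi> (Hmap t \<omega>) * \<psi> (Hmap t \<omega>)\<bar> \<le> C1 * C2" if "\<omega> \<in> space (Om T B)" for \<omega>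
    using Gf_bnd[OF t Hs[OF that] phi pb] qb[OF Hs[OF that]] by (simp add: abs_mult mult_mono)
  have "(\<integral>\<omega>. \<phi> (snd \<omega> t) * \<psi> (Hmap t \<omega>) \<partial>L T) = (\<integral>\<omega>. \<phi> (snd \<omega> t) * \<psi> (Hmap t \<omega>) \<partial>L t)"
    by (rule marg[where C="C1*C2"]) (use t fb in \<open>auto simp: dep_upto_def Hmap_upd\<close>)
  also have "\<dots> = (\<integral>\<omega>. Gf t \<phi> (Hmap t \<omega>) * \<psi> (Hmap t \<omega>) \<partial>L (t - 1))"
    by (rule onestep[OF t phi pb psi qb C])
  also have "\<dots> = (\<integral>\<omega>. Gf t \<phi> (Hmap t \<omega>) * \<psi> (Hmap t \<omega>) \<partial>L T)"
    by (rule marg[where C="C1*C2", symmetric]) (use t gb in \<open>auto simp: dep_upto_def Hmap_upd\<close>)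
  finally show ?thesis .
qed

end


lemma ac_distr:
  assumes ac: "absolutely_continuous M N" and s: "sets N = sets M" and f: "f \<in> M \<rightarrow>\<^sub>M S"
  shows "absolutely_continuous (distr M S f) (distr N S f)"
proof -
  have fN: "f \<in> N \<rightarrow>\<^sub>M S" using f s by (simp cong: measurable_cong_sets)
  have sp: "space N = space M" using s by (rule sets_eq_imp_space_eq)
  show ?thesis unfolding absolutely_continuous_def
  proof
    fix A assume "A \<in> null_sets (distr M S f)"
    then have "f -` A \<inter> space M \<in> null_sets M" "A \<in> sets S" using null_sets_distr_iff[OF f] by auto
    then have "f -` A \<inter> space N \<in> null_sets N" using ac sp unfolding absolutely_continuous_def by auto
    then show "A \<in> null_sets (distr N S f)" using null_sets_distr_iff[OF fN] \<open>A \<in> sets S\<close> by auto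
  qed
qed

locale two = S: setting T B gam P Qs + R: setting T B gam P Qt
  for T B gam P Qs Qt +
  assumes ac: "\<forall>t\<in>{1..T}. \<forall>h\<in>space (Hsp t). absolutely_continuous (Qs t h) (Qt t h)"
begin

lemma Kn_ac:
  assumes j: "j \<in> {1..T}" and \<omega>: "\<omega> \<in> space (Om T B)"
  shows "absolutely_continuous (Kn T B gam Qs j \<omega>) (Kn T B gam Qt j \<omega>)"
proof -
  have H: "Hmap j \<omega> \<in> space (Hsp j)" using j \<omega> by (intro S.Hmap_sp) auto
  have xm: "xhat T gam \<in> Qs j (Hmap j \<omega>) \<rightarrow>\<^sub>M borel"
    using xhat_meas[OF S.T S.g] S.Qsp[OF j H] by (simp cong: measurable_cong_sets)
  have a1: "absolutely_continuous (act T gam Qs j (Hmap j \<omega>)) (act T gam Qt j (Hmap j \<omega>))"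
    unfolding act_def
    by (rule ac_distr[OF _ _ xm]) (use ac j H S.Qsp[OF j H] R.Qsp[OF j H] in auto)
  have um: "(\<lambda>x. (fst \<omega>, (snd \<omega>)(j := x))) \<in> act T gam Qs j (Hmap j \<omega>) \<rightarrow>\<^sub>M Om T B"
    using S.upd_m[OF j \<omega>] S.actsp[OF j H] by (simp cong: measurable_cong_sets)
  show ?thesis unfolding Kn_def
    by (rule ac_distr[OF a1 _ um]) (use S.actsp[OF j H] R.actsp[OF j H] in auto)
qed

lemma L_ac: "k \<le> T \<Longrightarrow> absolutely_continuous (S.L k) (R.L k)"
proof (induction k)
  case 0 show ?case by (simp add: absolutely_continuous_def)
next
  case (Suc k)
  have j: "Suc k \<in> {1..T}" using Suc.prems by auto
  have IH: "absolutely_continuous (S.L k) (R.L k)" using Suc by simp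
  show ?case unfolding absolutely_continuous_def
  proof
    fix A assume A: "A \<in> null_sets (S.L (Suc k))"
    have As: "A \<in> sets (Om T B)" using A S.L_sets[OF Suc.prems] by (auto simp: null_sets_def)
    have KSm: "(\<lambda>\<omega>. emeasure (Kn T B gam Qs (Suc k) \<omega>) A) \<in> borel_measurable (Om T B)"
      by (rule measurable_compose[OF measurable_prob_algebraD[OF S.K_meas[OF j]] measurable_emeasure_subprob_algebra[OF As]])
    have KRm: "(\<lambda>\<omega>. emeasure (Kn T B gam Qt (Suc k) \<omega>) A) \<in> borel_measurable (Om T B)"
      by (rule measurable_compose[OF measurable_prob_algebraD[OF R.K_meas[OF j]] measurable_emeasure_subprob_algebra[OF As]])
    have "emeasure (S.L (Suc k)) A = 0" using A by auto
    then have "(\<integral>\<^sup>+\<omega>. emeasure (Kn T B gam Qs (Suc k) \<omega>) A \<partial>S.L k) = 0"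
      unfolding ilaw_Suc using emeasure_bind_prob_algebra[OF S.L_space[of k] S.K_meas[OF j] As] Suc.prems
      by simp
    then have "AE \<omega> in S.L k. emeasure (Kn T B gam Qs (Suc k) \<omega>) A = 0"
      using nn_integral_0_iff_AE[of "\<lambda>\<omega>. emeasure (Kn T B gam Qs (Suc k) \<omega>) A" "S.L k"] KSm
        S.L_sets[of k] Suc.prems by (simp cong: measurable_cong_sets)
    then have "AE \<omega> in R.L k. emeasure (Kn T B gam Qs (Suc k) \<omega>) A = 0"
      by (rule absolutely_continuous_AE[OF _ IH, rotated]) (use S.L_sets R.L_sets Suc.prems in auto)
    then have "AE \<omega> in R.L k. emeasure (Kn T B gam Qt (Suc k) \<omega>) A = 0"
    proof (rule AE_mp, intro AE_I2 impI)
      fix \<omega> assume "\<omega> \<in> space (R.L k)" and z: "emeasure (Kn T B gam Qs (Suc k) \<omega>) A = 0"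
      then have \<omega>: "\<omega> \<in> space (Om T B)" using R.L_spc[of k] Suc.prems by simp
      have sK: "sets (Kn T B gam Qs (Suc k) \<omega>) = sets (Om T B)"
        using measurable_space[OF S.K_meas[OF j] \<omega>] by (simp add: space_prob_algebra)
      have "A \<in> null_sets (Kn T B gam Qs (Suc k) \<omega>)" using z As sK by auto
      then have "A \<in> null_sets (Kn T B gam Qt (Suc k) \<omega>)"
        using Kn_ac[OF j \<omega>] unfolding absolutely_continuous_def by auto
      then show "emeasure (Kn T B gam Qt (Suc k) \<omega>) A = 0" by auto
    qed
    then have "(\<integral>\<^sup>+\<omega>. emeasure (Kn T B gam Qt (Suc k) \<omega>) A \<partial>R.L k) = 0"
      using nn_integral_0_iff_AE[of "\<lambda>\<omega>. emeasure (Kn T B gam Qt (Suc k) \<omega>) A" "R.L k"] KRm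
        R.L_sets[of k] Suc.prems by (simp cong: measurable_cong_sets)
    then have "emeasure (R.L (Suc k)) A = 0"
      unfolding ilaw_Suc using emeasure_bind_prob_algebra[OF R.L_space[of k] R.K_meas[OF j] As] Suc.prems
      by simp
    then show "A \<in> null_sets (R.L (Suc k))" using As R.L_sets[OF Suc.prems] by auto
  qed
qed

end


context two begin

lemma regret_t:
  assumes t: "t \<in> {1..T}" and f[measurable]: "f \<in> borel_measurable borel"
    and rng: "AE \<omega> in S.L T. a \<le> f (snd \<omega> t) - f xstar \<and> f (snd \<omega> t) - f xstar \<le> a + B'"
    and cm: "AE \<omega> in S.L T. real_cond_exp (S.L T) (vimage_algebra (space (S.L T)) (Hmap t) (Hsp t))
            (\<lambda>\<omega>. f (snd \<omega> t) - f xstar) \<omega> = (\<integral>\<omega>. f (snd \<omega> t) - f xstar \<partial>S.L T)"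
    and B': "0 < B'"
  defines "\<phi> \<equiv> \<lambda>x. max a (min (a + B') (f x - f xstar))"
  shows "integrable (S.L T) (\<lambda>\<omega>. f (snd \<omega> t) - f xstar)"
    "integrable (R.L T) (\<lambda>\<omega>. f (snd \<omega> t) - f xstar)"
    "(\<integral>\<omega>. f (snd \<omega> t) - f xstar \<partial>R.L T) - (\<integral>\<omega>. f (snd \<omega> t) - f xstar \<partial>S.L T)
      = (\<integral>h. R.Gf t \<phi> h - S.Gf t \<phi> h \<partial>distr (R.L T) (Hsp t) (Hmap t))"
proof -
  let ?r = "\<lambda>\<omega>. f (snd \<omega> t) - f xstar"
  have TT: "T \<le> T" by simp
  have phim[measurable]: "\<phi> \<in> borel_measurable borel" unfolding \<phi>_def by measurable
  have pb: "\<bar>\<phi> x\<bar> \<le> \<bar>a\<bar> + B'" for x using B' unfolding \<phi>_def by (auto simp: abs_le_iff)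
  have [measurable]: "Hmap t \<in> Om T B \<rightarrow>\<^sub>M Hsp t" by (rule Hmap_meas) (use t in auto)
  have [measurable]: "(\<lambda>\<omega>. snd \<omega> t) \<in> borel_measurable (Om T B)" by (rule meas_snd_comp[OF t])
  have [measurable]: "S.Gf t \<phi> \<in> borel_measurable (Hsp t)" by (rule S.Gf_meas[OF t]) measurable
  have [measurable]: "R.Gf t \<phi> \<in> borel_measurable (Hsp t)" by (rule R.Gf_meas[OF t]) measurable
  have sS: "sets (S.L T) = sets (Om T B)" and sR: "sets (R.L T) = sets (Om T B)"
    using S.L_sets R.L_sets by auto
  have spS: "space (S.L T) = space (Om T B)" and spR: "space (R.L T) = space (Om T B)"
    using S.L_spc R.L_spc by auto
  interpret LS: prob_space "S.L T" using S.L_prob by simp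
  interpret LR: prob_space "R.L T" using R.L_prob by simp
  have Hs: "\<omega> \<in> space (Om T B) \<Longrightarrow> Hmap t \<omega> \<in> space (Hsp t)" for \<omega> by (rule S.Hmap_sp) (use t in auto)
  have acL: "absolutely_continuous (S.L T) (R.L T)" by (rule L_ac) simp
  have rmS[measurable]: "?r \<in> borel_measurable (S.L T)" using sS by (simp cong: measurable_cong_sets)
  have rmR[measurable]: "?r \<in> borel_measurable (R.L T)" using sR by (simp cong: measurable_cong_sets)
  have aeS: "AE \<omega> in S.L T. ?r \<omega> = \<phi> (snd \<omega> t)"
    using rng by eventually_elim (auto simp: \<phi>_def)
  have aeR: "AE \<omega> in R.L T. ?r \<omega> = \<phi> (snd \<omega> t)"
    by (rule absolutely_continuous_AE[OF _ acL aeS]) (simp add: sS sR)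
  have phiS[measurable]: "(\<lambda>\<omega>. \<phi> (snd \<omega> t)) \<in> borel_measurable (S.L T)" using sS by (simp cong: measurable_cong_sets)
  have phiR[measurable]: "(\<lambda>\<omega>. \<phi> (snd \<omega> t)) \<in> borel_measurable (R.L T)" using sR by (simp cong: measurable_cong_sets)
  have iphiS: "integrable (S.L T) (\<lambda>\<omega>. \<phi> (snd \<omega> t))"
    by (rule bnd_int(2)[OF LS.prob_space_axioms phiS pb])
  have iphiR: "integrable (R.L T) (\<lambda>\<omega>. \<phi> (snd \<omega> t))"
    by (rule bnd_int(2)[OF LR.prob_space_axioms phiR pb])
  show irS: "integrable (S.L T) ?r" using integrable_cong_AE[OF rmS phiS aeS] iphiS by simp
  show irR: "integrable (R.L T) ?r" using integrable_cong_AE[OF rmR phiR aeR] iphiR by simp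
  have GSm: "(\<lambda>\<omega>. S.Gf t \<phi> (Hmap t \<omega>)) \<in> borel_measurable (Om T B)" by measurable
  have GRm: "(\<lambda>\<omega>. R.Gf t \<phi> (Hmap t \<omega>)) \<in> borel_measurable (Om T B)" by measurable
  have GSb: "\<bar>S.Gf t \<phi> (Hmap t \<omega>)\<bar> \<le> \<bar>a\<bar> + B'" if "\<omega> \<in> space (Om T B)" for \<omega>
    by (rule S.Gf_bnd[OF t Hs[OF that] _ pb]) measurable
  have GRb: "\<bar>R.Gf t \<phi> (Hmap t \<omega>)\<bar> \<le> \<bar>a\<bar> + B'" if "\<omega> \<in> space (Om T B)" for \<omega>
    by (rule R.Gf_bnd[OF t Hs[OF that] _ pb]) measurable
  have iGSS: "integrable (S.L T) (\<lambda>\<omega>. S.Gf t \<phi> (Hmap t \<omega>))"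
    by (rule bnd_int(2)[OF LS.prob_space_axioms _ GSb]) (use GSm sS spS in \<open>simp_all cong: measurable_cong_sets\<close>)
  have iGSR: "integrable (R.L T) (\<lambda>\<omega>. S.Gf t \<phi> (Hmap t \<omega>))"
    by (rule bnd_int(2)[OF LR.prob_space_axioms _ GSb]) (use GSm sR spR in \<open>simp_all cong: measurable_cong_sets\<close>)
  have iGRR: "integrable (R.L T) (\<lambda>\<omega>. R.Gf t \<phi> (Hmap t \<omega>))"
    by (rule bnd_int(2)[OF LR.prob_space_axioms _ GRb]) (use GRm sR spR in \<open>simp_all cong: measurable_cong_sets\<close>)
  have towS: "(\<integral>\<omega>. \<phi> (snd \<omega> t) * \<psi> (Hmap t \<omega>) \<partial>S.L T) = (\<integral>\<omega>. S.Gf t \<phi> (Hmap t \<omega>) * \<psi> (Hmap t \<omega>) \<partial>S.L T)"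
    if "\<psi> \<in> borel_measurable (Hsp t)" "\<And>h. h \<in> space (Hsp t) \<Longrightarrow> \<bar>\<psi> h\<bar> \<le> 1" for \<psi>
    using S.main_id[OF t phim pb that(1) that(2)] by simp
  have towR: "(\<integral>\<omega>. \<phi> (snd \<omega> t) \<partial>R.L T) = (\<integral>\<omega>. R.Gf t \<phi> (Hmap t \<omega>) \<partial>R.L T)"
    using R.main_id[OF t phim pb, of "\<lambda>_. 1" 1] by simp
  define F where "F = vimage_algebra (space (S.L T)) (Hmap t) (Hsp t)"
  have Hfun: "Hmap t \<in> space (S.L T) \<rightarrow> space (Hsp t)" using Hs spS by auto
  have sF: "sets F = {Hmap t -` A \<inter> space (S.L T) | A. A \<in> sets (Hsp t)}"
    unfolding F_def by (rule sets_vimage_algebra2[OF Hfun])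
  have HmS: "Hmap t \<in> S.L T \<rightarrow>\<^sub>M Hsp t" using sS by (simp cong: measurable_cong_sets)
  have subalg: "subalgebra (S.L T) F"
    unfolding subalgebra_def
  proof
    show "space F = space (S.L T)" unfolding F_def by simp
    show "sets F \<subseteq> sets (S.L T)" unfolding sF using measurable_sets[OF HmS] by auto
  qed
  interpret FS: sigma_finite_subalgebra "S.L T" F
    by (rule finite_measure_subalgebra_is_sigma_finite) (unfold_locales, rule subalg)
  have ce: "AE \<omega> in S.L T. real_cond_exp (S.L T) F ?r \<omega> = S.Gf t \<phi> (Hmap t \<omega>)"
  proof (rule FS.real_cond_exp_charact)
    show "integrable (S.L T) ?r" by (rule irS)
    show "integrable (S.L T) (\<lambda>\<omega>. S.Gf t \<phi> (Hmap t \<omega>))" by (rule iGSS)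
    show "(\<lambda>\<omega>. S.Gf t \<phi> (Hmap t \<omega>)) \<in> borel_measurable F"
      unfolding F_def by (rule measurable_compose[OF measurable_vimage_algebra1[OF Hfun]]) measurable
    fix A assume "A \<in> sets F"
    then obtain A' where A': "A' \<in> sets (Hsp t)" "A = Hmap t -` A' \<inter> space (S.L T)" using sF by auto
    have ind: "\<omega> \<in> space (S.L T) \<Longrightarrow> (indicator A \<omega> :: real) = indicator A' (Hmap t \<omega>)" for \<omega>
      using A' by (auto split: split_indicator)
    have im[measurable]: "(indicator A' :: _ \<Rightarrow> real) \<in> borel_measurable (Hsp t)" using A' by measurable
    have "(\<integral>\<omega>\<in>A. ?r \<omega> \<partial>S.L T) = (\<integral>\<omega>. \<phi> (snd \<omega> t) * indicator A' (Hmap t \<omega>) \<partial>S.L T)"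
      unfolding set_lebesgue_integral_def
    proof (rule integral_cong_AE)
      show "(\<lambda>\<omega>. indicator A \<omega> *\<^sub>R ?r \<omega>) \<in> borel_measurable (S.L T)"
        using \<open>A \<in> sets F\<close> subalg unfolding subalgebra_def by (intro borel_measurable_scaleR) auto
      show "(\<lambda>\<omega>. \<phi> (snd \<omega> t) * indicator A' (Hmap t \<omega>)) \<in> borel_measurable (S.L T)"
        using HmS by measurable
      show "AE \<omega> in S.L T. indicator A \<omega> *\<^sub>R ?r \<omega> = \<phi> (snd \<omega> t) * indicator A' (Hmap t \<omega>)"
      proof (rule AE_mp[OF aeS], rule AE_I2, rule impI)
        fix \<omega> assume "\<omega> \<in> space (S.L T)" "?r \<omega> = \<phi> (snd \<omega> t)"
        then show "indicator A \<omega> *\<^sub>R ?r \<omega> = \<phi> (snd \<omega> t) * indicator A' (Hmap t \<omega>)"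
          using ind by simp
      qed
    qed
    also have "\<dots> = (\<integral>\<omega>. S.Gf t \<phi> (Hmap t \<omega>) * indicator A' (Hmap t \<omega>) \<partial>S.L T)"
      by (rule towS[OF im]) (auto simp: indicator_def)
    also have "\<dots> = (\<integral>\<omega>\<in>A. S.Gf t \<phi> (Hmap t \<omega>) \<partial>S.L T)"
      unfolding set_lebesgue_integral_def
      by (intro Bochner_Integration.integral_cong refl) (auto simp: ind)
    finally show "(\<integral>\<omega>\<in>A. ?r \<omega> \<partial>S.L T) = (\<integral>\<omega>\<in>A. S.Gf t \<phi> (Hmap t \<omega>) \<partial>S.L T)" .
  qed
  have cS: "AE \<omega> in S.L T. S.Gf t \<phi> (Hmap t \<omega>) = (\<integral>\<omega>. ?r \<omega> \<partial>S.L T)"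
    using ce cm unfolding F_def by eventually_elim simp
  have cR: "AE \<omega> in R.L T. S.Gf t \<phi> (Hmap t \<omega>) = (\<integral>\<omega>. ?r \<omega> \<partial>S.L T)"
    by (rule absolutely_continuous_AE[OF _ acL cS]) (simp add: sS sR)
  have e1: "(\<integral>\<omega>. S.Gf t \<phi> (Hmap t \<omega>) \<partial>R.L T) = (\<integral>\<omega>. ?r \<omega> \<partial>S.L T)"
  proof -
    have "(\<integral>\<omega>. S.Gf t \<phi> (Hmap t \<omega>) \<partial>R.L T) = (\<integral>\<omega>. (\<integral>\<omega>. ?r \<omega> \<partial>S.L T) \<partial>R.L T)"
      by (rule integral_cong_AE[OF _ _ cR]) (use GSm sR in \<open>simp_all cong: measurable_cong_sets\<close>)
    then show ?thesis by (simp add: LR.prob_space)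
  qed
  have e2: "(\<integral>\<omega>. ?r \<omega> \<partial>R.L T) = (\<integral>\<omega>. R.Gf t \<phi> (Hmap t \<omega>) \<partial>R.L T)"
    using integral_cong_AE[OF rmR phiR aeR] towR by simp
  have "(\<integral>h. R.Gf t \<phi> h - S.Gf t \<phi> h \<partial>distr (R.L T) (Hsp t) (Hmap t))
     = (\<integral>\<omega>. R.Gf t \<phi> (Hmap t \<omega>) - S.Gf t \<phi> (Hmap t \<omega>) \<partial>R.L T)"
    by (rule integral_distr) (use HmS sR sS in \<open>simp_all cong: measurable_cong_sets\<close>)
  also have "\<dots> = (\<integral>\<omega>. R.Gf t \<phi> (Hmap t \<omega>) \<partial>R.L T) - (\<integral>\<omega>. S.Gf t \<phi> (Hmap t \<omega>) \<partial>R.L T)"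
    using iGRR iGSR by simp
  finally show "(\<integral>\<omega>. ?r \<omega> \<partial>R.L T) - (\<integral>\<omega>. ?r \<omega> \<partial>S.L T)
      = (\<integral>h. R.Gf t \<phi> h - S.Gf t \<phi> h \<partial>distr (R.L T) (Hsp t) (Hmap t))"
    using e1 e2 by simp
qed

end


lemma final_alg:
  fixes X S Tn B' V :: real
  assumes S: "0 \<le> S" and Tn: "1 \<le> Tn" and B': "0 < B'" and V: "1 \<le> V"
    and H: "\<And>l. 0 < l \<Longrightarrow> l * X \<le> S + Tn * (l\<^sup>2 * B'\<^sup>2 / 8)"
  shows "X \<le> B' * sqrt (Tn * (2 + ln V) / 2 * S)"
proof -
  have "0 \<le> ln V" using V by simp
  then have "1 \<le> (2 + ln V) / 2" by simp
  moreover have "0 \<le> Tn * S" using S Tn by simp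
  ultimately have "Tn * S * 1 \<le> Tn * S * ((2 + ln V) / 2)" by (intro mult_left_mono)
  then have "Tn * S \<le> Tn * (2 + ln V) / 2 * S" by (simp add: algebra_simps)
  then have R: "B' * sqrt (Tn * S) \<le> B' * sqrt (Tn * (2 + ln V) / 2 * S)"
    using B' by (intro mult_left_mono) auto
  show ?thesis
  proof (cases "S = 0")
    case True
    show ?thesis
    proof (rule ccontr)
      assume "\<not> ?thesis"
      then have X: "0 < X" using True B' by simp
      define l where "l = 4 * X / (Tn * B'\<^sup>2)"
      have l: "0 < l" using X Tn B' by (simp add: l_def)
      have "l * X \<le> Tn * (l\<^sup>2 * B'\<^sup>2 / 8)" using H[OF l] True by simp
      then have "X \<le> Tn * l * B'\<^sup>2 / 8" using l by (simp add: power2_eq_square field_simps)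
      also have "\<dots> = X / 2" using Tn B' by (simp add: l_def field_simps power2_eq_square)
      finally show False using X by simp
    qed
  next
    case False
    then have Sp: "0 < S" using S by simp
    define s where "s = sqrt S"
    define \<tau> where "\<tau> = sqrt Tn"
    have sp: "0 < s" using Sp by (simp add: s_def)
    have tp: "0 < \<tau>" using Tn by (simp add: \<tau>_def)
    have s2: "s\<^sup>2 = S" using S by (simp add: s_def)
    have t2: "\<tau>\<^sup>2 = Tn" using Tn by (simp add: \<tau>_def)
    define l where "l = 2 * s / (\<tau> * B')"
    have l: "0 < l" using sp tp B' by (simp add: l_def)
    have e: "Tn * (l\<^sup>2 * B'\<^sup>2 / 8) = S / 2"
      using tp B' by (simp add: l_def power_divide power_mult_distrib s2[symmetric] t2[symmetric] field_simps)
    have "l * X \<le> 3 * S / 2" using H[OF l] e by linarith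
    then have "X \<le> 3 * S / (2 * l)" using l by (simp add: field_simps)
    also have "\<dots> = 3 / 4 * (s * \<tau> * B')"
      using sp tp B' by (simp add: l_def s2[symmetric] field_simps power2_eq_square)
    also have "\<dots> \<le> B' * sqrt (Tn * S)"
      using sp tp B' by (simp add: s_def \<tau>_def real_sqrt_mult)
    finally show ?thesis using R by simp
  qed
qed

lemma le_enn2real_ennreal: "x \<le> enn2real (ennreal x)"
  by (cases "0 \<le> x") (auto simp: ennreal_neg)

context two begin

lemma pw:
  assumes t: "t \<in> {1..T}" and h: "h \<in> space (Hsp t)" and phim[measurable]: "\<phi> \<in> borel_measurable borel"
    and pb: "\<And>x. a \<le> \<phi> x \<and> \<phi> x \<le> a + B'" and l: "0 < l"
    and fin: "KL (Qs t h) (Qt t h) \<noteq> \<infinity>"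
  shows "l * (R.Gf t \<phi> h - S.Gf t \<phi> h) \<le> enn2real (KL (Qs t h) (Qt t h)) + l\<^sup>2 * B'\<^sup>2 / 8"
proof -
  have c: "absolutely_continuous (Qt t h) (Qs t h) \<and> integrable (Qs t h) (entropy_density (exp 1) (Qt t h) (Qs t h))"
    and kv: "KL (Qs t h) (Qt t h) = ennreal (KL_divergence (exp 1) (Qt t h) (Qs t h))"
    using fin unfolding KL_def by (auto split: if_splits)
  have sS: "sets (Qs t h) = sets (Dsp T B)" "prob_space (Qs t h)" using S.Qsp[OF t h] by auto
  have sR: "sets (Qt t h) = sets (Dsp T B)" "prob_space (Qt t h)" using R.Qsp[OF t h] by auto
  have [measurable]: "xhat T gam \<in> borel_measurable (Dsp T B)" by (rule xhat_meas[OF S.T S.g])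
  have um: "(\<lambda>d. \<phi> (xhat T gam d)) \<in> borel_measurable (Qt t h)" using sR(1) by (simp cong: measurable_cong_sets)
  have "l * ((\<integral>d. \<phi> (xhat T gam d) \<partial>Qt t h) - (\<integral>d. \<phi> (xhat T gam d) \<partial>Qs t h))
      \<le> KL_divergence (exp 1) (Qt t h) (Qs t h) + l\<^sup>2 * B'\<^sup>2 / 8"
    by (rule DVH[OF sS(2) sR(2) _ _ _ um _ l]) (use c sS sR pb in auto)
  moreover have "KL_divergence (exp 1) (Qt t h) (Qs t h) \<le> enn2real (KL (Qs t h) (Qt t h))"
    unfolding kv by (rule le_enn2real_ennreal)
  ultimately show ?thesis unfolding S.Gf_def R.Gf_def by simp
qed

lemma per_t:
  assumes t: "t \<in> {1..T}" and phim[measurable]: "\<phi> \<in> borel_measurable borel"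
    and pb: "\<And>x. a \<le> \<phi> x \<and> \<phi> x \<le> a + B'" and l: "0 < l" and B': "0 < B'"
    and fin: "(\<integral>\<^sup>+h. KL (Qs t h) (Qt t h) \<partial>distr (R.L T) (Hsp t) (Hmap t)) < \<infinity>"
  shows "l * (\<integral>h. R.Gf t \<phi> h - S.Gf t \<phi> h \<partial>distr (R.L T) (Hsp t) (Hmap t))
     \<le> enn2real (\<integral>\<^sup>+h. KL (Qs t h) (Qt t h) \<partial>distr (R.L T) (Hsp t) (Hmap t)) + l\<^sup>2 * B'\<^sup>2 / 8"
proof -
  let ?\<mu> = "distr (R.L T) (Hsp t) (Hmap t)"
  let ?D = "\<lambda>h. R.Gf t \<phi> h - S.Gf t \<phi> h"
  define C where "C = l\<^sup>2 * B'\<^sup>2 / 8"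
  define w where "w h = max 0 (l * ?D h - C)" for h
  have HmR: "Hmap t \<in> R.L T \<rightarrow>\<^sub>M Hsp t"
    using Hmap_meas[of t T B] t R.L_sets[of T] by (simp cong: measurable_cong_sets)
  interpret mu: prob_space ?\<mu> using R.L_prob[of T] HmR by (intro prob_space.prob_space_distr) auto
  have spmu: "space ?\<mu> = space (Hsp t)" by simp
  have [measurable]: "S.Gf t \<phi> \<in> borel_measurable (Hsp t)" by (rule S.Gf_meas[OF t phim])
  have [measurable]: "R.Gf t \<phi> \<in> borel_measurable (Hsp t)" by (rule R.Gf_meas[OF t phim])
  have pbb: "\<bar>\<phi> x\<bar> \<le> \<bar>a\<bar> + B'" for x using pb[of x] B' by (auto simp: abs_le_iff)
  have Db: "\<bar>?D h\<bar> \<le> 2 * (\<bar>a\<bar> + B')" if "h \<in> space ?\<mu>" for h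
    using S.Gf_bnd[OF t _ phim pbb, of h] R.Gf_bnd[OF t _ phim pbb, of h] that by auto
  have Dm: "?D \<in> borel_measurable ?\<mu>" by simp
  have wm: "w \<in> borel_measurable ?\<mu>" unfolding w_def by simp
  have iD: "integrable ?\<mu> ?D" by (rule bnd_int(2)[OF mu.prob_space_axioms Dm Db])
  have wb: "\<bar>w h\<bar> \<le> l * (2 * (\<bar>a\<bar> + B')) + \<bar>C\<bar>" if "h \<in> space ?\<mu>" for h
  proof -
    have "\<bar>l * ?D h\<bar> \<le> l * (2 * (\<bar>a\<bar> + B'))" using Db[OF that] l by (simp add: abs_mult)
    then show ?thesis unfolding w_def by (auto simp: abs_le_iff)
  qed
  have iw: "integrable ?\<mu> w" by (rule bnd_int(2)[OF mu.prob_space_axioms wm wb])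
  have le: "ennreal (w h) \<le> KL (Qs t h) (Qt t h)" if "h \<in> space ?\<mu>" for h
  proof (cases "KL (Qs t h) (Qt t h) = \<infinity>")
    case True then show ?thesis by simp
  next
    case False
    have h: "h \<in> space (Hsp t)" using that by simp
    have "l * ?D h - C \<le> enn2real (KL (Qs t h) (Qt t h))"
      using pw[OF t h phim pb l False] by (simp add: C_def)
    then have "w h \<le> enn2real (KL (Qs t h) (Qt t h))" unfolding w_def by simp
    then have "ennreal (w h) \<le> ennreal (enn2real (KL (Qs t h) (Qt t h)))" by (rule ennreal_leI)
    also have "\<dots> = KL (Qs t h) (Qt t h)" using False by (simp add: ennreal_enn2real_if)
    finally show ?thesis .
  qed
  have "(\<integral>\<^sup>+h. ennreal (w h) \<partial>?\<mu>) \<le> (\<integral>\<^sup>+h. KL (Qs t h) (Qt t h) \<partial>?\<mu>)"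
    by (rule nn_integral_mono) (rule le)
  then have "enn2real (\<integral>\<^sup>+h. ennreal (w h) \<partial>?\<mu>) \<le> enn2real (\<integral>\<^sup>+h. KL (Qs t h) (Qt t h) \<partial>?\<mu>)"
    using fin by (intro enn2real_mono) auto
  moreover have "(\<integral>h. w h \<partial>?\<mu>) = enn2real (\<integral>\<^sup>+h. ennreal (w h) \<partial>?\<mu>)"
    by (rule integral_eq_nn_integral[OF wm]) (auto simp: w_def)
  ultimately have wI: "(\<integral>h. w h \<partial>?\<mu>) \<le> enn2real (\<integral>\<^sup>+h. KL (Qs t h) (Qt t h) \<partial>?\<mu>)" by simp
  have "l * (\<integral>h. ?D h \<partial>?\<mu>) = (\<integral>h. l * ?D h \<partial>?\<mu>)" by simp
  also have "\<dots> \<le> (\<integral>h. w h + C \<partial>?\<mu>)"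
    by (rule integral_mono) (use iD iw in \<open>auto simp: w_def\<close>)
  also have "\<dots> = (\<integral>h. w h \<partial>?\<mu>) + C"
  proof -
    have "mu.prob (space (Hsp t)) = 1" using mu.prob_space by simp
    then show ?thesis using iw by simp
  qed
  finally show ?thesis using wI by (simp add: C_def)
qed

end


theorem theorem2p3:
  fixes T :: nat and B hc bc gam V B' xstar :: real
    and P :: "(nat \<Rightarrow> real) measure"
    and f :: "real \<Rightarrow> real"
    and Qstar Qth :: "nat \<Rightarrow> (nat \<Rightarrow> real \<times> real \<times> bool) \<Rightarrow> (nat \<Rightarrow> real) measure"
  defines "gam \<equiv> bc / (bc + hc)"
  defines "Lstar \<equiv> interaction T B gam P Qstar"
  defines "Lth \<equiv> interaction T B gam P Qth"
  assumes B: "0 \<le> B"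
    and costs: "0 < hc" "0 < bc"
    and P: "prob_space P" "sets P = sets (Dsp T B)"
    and fstar: "\<forall>t\<in>{1..T}. \<forall>x\<in>{0..B}. (\<integral>d. loss hc bc x (d t) \<partial>P) = f x"
    and xstar: "xstar \<in> {0..B}" "\<forall>x\<in>{0..B}. f xstar \<le> f x"
    and Qstar_kernel: "\<forall>t\<in>{1..T}. Qstar t \<in> Hsp t \<rightarrow>\<^sub>M prob_algebra (Dsp T B)"
    and Qth_kernel: "\<forall>t\<in>{1..T}. Qth t \<in> Hsp t \<rightarrow>\<^sub>M prob_algebra (Dsp T B)"
    and Qstar_cond: "\<forall>L\<in>{Lstar, Lth}. \<forall>t\<in>{1..T}. \<forall>F\<in>sets (Dsp T B).
         AE \<omega> in L. real_cond_exp L (vimage_algebra (space L) (Hmap t) (Hsp t))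
                        (\<lambda>\<omega>. indicator F (fst \<omega>)) \<omega> = measure (Qstar t (Hmap t \<omega>)) F"
    and V: "1 \<le> V"
    and ac: "\<forall>t\<in>{1..T}. \<forall>h\<in>space (Hsp t). absolutely_continuous (Qstar t h) (Qth t h)"
    and ratio: "\<forall>t\<in>{1..T}. \<forall>h\<in>space (Hsp t). \<forall>F\<in>sets (Dsp T B).
         measure (Qth t h) F / measure (Qstar t h) F \<le> V"
    and cond_mean: "\<forall>t\<in>{1..T}. AE \<omega> in Lstar.
         real_cond_exp Lstar (vimage_algebra (space Lstar) (Hmap t) (Hsp t))
            (\<lambda>\<omega>. f (snd \<omega> t) - f xstar) \<omega> = (\<integral>\<omega>. f (snd \<omega> t) - f xstar \<partial>Lstar)"
    and B': "0 < B'"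
    and range: "\<forall>t\<in>{1..T}. \<exists>a. AE \<omega> in Lstar.
         a \<le> f (snd \<omega> t) - f xstar \<and> f (snd \<omega> t) - f xstar \<le> a + B'"
  shows "Delta_comp T Qstar Qth Lth \<noteq> \<infinity> \<longrightarrow>
         breg T f xstar Lth \<le> breg T f xstar Lstar
           + B' * sqrt (real T * (2 + ln V) / 2 * enn2real (Delta_comp T Qstar Qth Lth))"
proof (intro impI)
  assume Dfin: "Delta_comp T Qstar Qth Lth \<noteq> \<infinity>"
  show "breg T f xstar Lth \<le> breg T f xstar Lstar
           + B' * sqrt (real T * (2 + ln V) / 2 * enn2real (Delta_comp T Qstar Qth Lth))"
  proof (cases "T = 0")
    case True
    then show ?thesis by (simp add: breg_def)
  next
    case False
    then have T1: "1 \<le> T" by simp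
    have g: "0 < gam" "gam \<le> 1" using costs unfolding gam_def by (auto simp: field_simps)
    interpret two T B gam P Qstar Qth
      by (intro two.intro setting.intro T1 g P Qstar_kernel Qth_kernel) (unfold two_axioms_def, rule ac)
    have LsE: "Lstar = S.L T" unfolding Lstar_def interaction_def ..
    have LtE: "Lth = R.L T" unfolding Lth_def interaction_def ..
    have RHS0: "0 \<le> B' * sqrt (real T * (2 + ln V) / 2 * enn2real (Delta_comp T Qstar Qth Lth))"
      using B' V by simp
    show ?thesis
    proof (cases "f \<in> borel_measurable borel")
      case False
      let ?F = "\<lambda>\<omega>. \<Sum>t = 1..T. f (snd \<omega> t) - f xstar"
      have nm: "?F \<notin> borel_measurable (Om T B)"
      proof
        assume Fm: "?F \<in> borel_measurable (Om T B)"
        define e where "e y = ((\<lambda>s\<in>{1..T}. 0::real), (\<lambda>s\<in>{1..T}. if s = 1 then y else 0::real))" for y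
        have e2: "(\<lambda>y. \<lambda>s\<in>{1..T}. if s = 1 then y else 0::real) \<in> (borel::real measure) \<rightarrow>\<^sub>M (\<Pi>\<^sub>M s\<in>{1..T}. (borel :: real measure))"
          by (rule measurable_restrict) simp
        have em: "e \<in> borel \<rightarrow>\<^sub>M Om T B"
          unfolding e_def
          by (rule measurable_Pair[OF measurable_const e2[folded Xsp_def]]) (use B in \<open>auto simp: space_Dsp\<close>)
        have cm: "(\<lambda>y. ?F (e y)) \<in> borel_measurable borel" by (rule measurable_compose[OF em Fm])
        have eq: "?F (e y) = (f y - f xstar) + (\<Sum>t = Suc 1..T. f 0 - f xstar)" for y
        proof -
          have "?F (e y) = (\<Sum>t = 1..T. f (if t = 1 then y else 0) - f xstar)"
            by (intro sum.cong) (auto simp: e_def)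
          also have "\<dots> = (f y - f xstar) + (\<Sum>t = Suc 1..T. f (if t = 1 then y else 0) - f xstar)"
            using T1 by (subst sum.atLeast_Suc_atMost) auto
          also have "(\<Sum>t = Suc 1..T. f (if t = 1 then y else 0) - f xstar) = (\<Sum>t = Suc 1..T. f 0 - f xstar)"
            by (intro sum.cong) auto
          finally show ?thesis .
        qed
        define c where "c = (\<Sum>t = Suc 1..T. f 0 - f xstar)"
        have "(\<lambda>y. ?F (e y) - c + f xstar) \<in> borel_measurable borel"
          using cm by measurable
        moreover have "(\<lambda>y. ?F (e y) - c + f xstar) = f"
        proof (rule ext)
          fix y
          have "?F (e y) = (f y - f xstar) + c" unfolding c_def by (rule eq)
          then show "?F (e y) - c + f xstar = f y" by simp
        qed
        ultimately show False using False by simp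
      qed
      have "\<not> integrable (S.L T) ?F"
        using nm S.L_sets[of T] by (auto cong: measurable_cong_sets)
      moreover have "\<not> integrable (R.L T) ?F"
        using nm R.L_sets[of T] by (auto cong: measurable_cong_sets)
      ultimately have "breg T f xstar Lth = 0" "breg T f xstar Lstar = 0"
        unfolding breg_def LsE LtE by (simp_all add: not_integrable_integral_eq)
      then show ?thesis using RHS0 by simp
    next
      case True
      note fm[measurable] = True
      have "\<forall>t\<in>{1..T}. \<exists>a. AE \<omega> in S.L T. a \<le> f (snd \<omega> t) - f xstar \<and> f (snd \<omega> t) - f xstar \<le> a + B'"
        using range unfolding LsE .
      from bchoice[OF this] obtain a where a': "\<forall>t\<in>{1..T}. AE \<omega> in S.L T. a t \<le> f (snd \<omega> t) - f xstar \<and> f (snd \<omega> t) - f xstar \<le> a t + B'"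
        by blast
      then have a: "\<And>t. t \<in> {1..T} \<Longrightarrow> AE \<omega> in S.L T. a t \<le> f (snd \<omega> t) - f xstar \<and> f (snd \<omega> t) - f xstar \<le> a t + B'"
        by blast
      define \<phi> where "\<phi> t = (\<lambda>x. max (a t) (min (a t + B') (f x - f xstar)))" for t
      have cm: "\<And>t. t \<in> {1..T} \<Longrightarrow> AE \<omega> in S.L T. real_cond_exp (S.L T) (vimage_algebra (space (S.L T)) (Hmap t) (Hsp t))
            (\<lambda>\<omega>. f (snd \<omega> t) - f xstar) \<omega> = (\<integral>\<omega>. f (snd \<omega> t) - f xstar \<partial>S.L T)"
        using cond_mean unfolding LsE by blast
      note rt = regret_t[OF _ fm a cm B']
      let ?\<mu> = "\<lambda>t. distr (R.L T) (Hsp t) (Hmap t)"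
      let ?Dl = "\<lambda>t. (\<integral>\<^sup>+h. KL (Qstar t h) (Qth t h) \<partial>?\<mu> t)"
      have Dsum: "Delta_comp T Qstar Qth Lth = (\<Sum>t = 1..T. ?Dl t)"
        unfolding Delta_comp_def LtE ..
      have Dlfin: "?Dl t < \<infinity>" if t: "t \<in> {1..T}" for t
      proof -
        have "?Dl t \<le> (\<Sum>t = 1..T. ?Dl t)" by (rule member_le_sum[OF t]) auto
        also have "\<dots> < \<infinity>" using Dfin Dsum by (simp add: less_top)
        finally show ?thesis .
      qed
      have Ssum: "enn2real (Delta_comp T Qstar Qth Lth) = (\<Sum>t = 1..T. enn2real (?Dl t))"
        unfolding Dsum by (subst enn2real_sum) (use Dlfin in auto)
      define X where "X = breg T f xstar Lth - breg T f xstar Lstar"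
      have Xeq: "X = (\<Sum>t = 1..T. (\<integral>h. R.Gf t (\<phi> t) h - S.Gf t (\<phi> t) h \<partial>?\<mu> t))"
      proof -
        have "X = (\<Sum>t = 1..T. \<integral>\<omega>. f (snd \<omega> t) - f xstar \<partial>R.L T) - (\<Sum>t = 1..T. \<integral>\<omega>. f (snd \<omega> t) - f xstar \<partial>S.L T)"
        proof -
          have s1: "(\<integral>\<omega>. (\<Sum>t = 1..T. f (snd \<omega> t) - f xstar) \<partial>R.L T) = (\<Sum>t = 1..T. \<integral>\<omega>. f (snd \<omega> t) - f xstar \<partial>R.L T)"
            by (rule Bochner_Integration.integral_sum[where f="\<lambda>t \<omega>. f (snd \<omega> t) - f xstar"]) (use rt(2) in auto)
          have s2: "(\<integral>\<omega>. (\<Sum>t = 1..T. f (snd \<omega> t) - f xstar) \<partial>S.L T) = (\<Sum>t = 1..T. \<integral>\<omega>. f (snd \<omega> t) - f xstar \<partial>S.L T)"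
            by (rule Bochner_Integration.integral_sum[where f="\<lambda>t \<omega>. f (snd \<omega> t) - f xstar"]) (use rt(1) in auto)
          show ?thesis unfolding X_def breg_def LsE LtE s1 s2 ..
        qed
        also have "\<dots> = (\<Sum>t = 1..T. (\<integral>\<omega>. f (snd \<omega> t) - f xstar \<partial>R.L T) - (\<integral>\<omega>. f (snd \<omega> t) - f xstar \<partial>S.L T))"
          by (simp add: sum_subtractf)
        also have "\<dots> = (\<Sum>t = 1..T. (\<integral>h. R.Gf t (\<phi> t) h - S.Gf t (\<phi> t) h \<partial>?\<mu> t))"
          by (intro sum.cong refl) (simp add: rt(3) \<phi>_def)
        finally show ?thesis .
      qed
      have H: "l * X \<le> enn2real (Delta_comp T Qstar Qth Lth) + real T * (l\<^sup>2 * B'\<^sup>2 / 8)" if l: "0 < l" for l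
      proof -
        have "l * X = (\<Sum>t = 1..T. l * (\<integral>h. R.Gf t (\<phi> t) h - S.Gf t (\<phi> t) h \<partial>?\<mu> t))"
          unfolding Xeq by (simp add: sum_distrib_left)
        also have "\<dots> \<le> (\<Sum>t = 1..T. enn2real (?Dl t) + l\<^sup>2 * B'\<^sup>2 / 8)"
        proof (rule sum_mono)
          fix t assume t: "t \<in> {1..T}"
          show "l * (\<integral>h. R.Gf t (\<phi> t) h - S.Gf t (\<phi> t) h \<partial>?\<mu> t) \<le> enn2real (?Dl t) + l\<^sup>2 * B'\<^sup>2 / 8"
            by (rule per_t[OF t _ _ l B' Dlfin[OF t], where a="a t"]) (use B' in \<open>auto simp: \<phi>_def\<close>)
        qed
        also have "\<dots> = enn2real (Delta_comp T Qstar Qth Lth) + real T * (l\<^sup>2 * B'\<^sup>2 / 8)"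
          by (simp add: sum.distrib Ssum)
        finally show ?thesis .
      qed
      have "X \<le> B' * sqrt (real T * (2 + ln V) / 2 * enn2real (Delta_comp T Qstar Qth Lth))"
        by (rule final_alg[OF _ _ B' V H]) (use T1 in auto)
      then show ?thesis unfolding X_def by simp
    qed
  qed
qed


end
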